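(* Let $\mathcal G$ be a braided stability groupoid, $R$ a commutative ring, $N\in\mathbb N$, $k,a\in\mathbb N$, and assume H3($N$): $\widetilde H_i(R\mathrm{Hom}(0,-))_n=0$ for all $-1\le i<N$ and all $n>k\cdot i+a$. Let $m\in\mathbb N$ and let $W_m$ be an $RG_m$-module. Then $\widetilde H_i(R\mathrm{Hom}(m,-)\otimes_{RG_m}W_m)_n=0$ for all $-1\le i<N$ and all $n>k\cdot i+a+m$.
   Context: Stability groupoid: monoidal groupoid $(\mathcal G,\oplus,0)$ with objects $(\mathbb N,+,0)$, $G_n=\mathrm{Aut}(n)$, $\oplus\colon G_m\times G_n\to G_{m+n}$ injective, $G_0$ trivial, $(G_{l+m}\times1)\cap(1\times G_{m+n})=1\times G_m\times1$ in $G_{l+m+n}$; braided: with braiding $b_{m,n}\in G_{m+n}$. $U\mathcal G$: objects $\mathbb N$, $\mathrm{Hom}(m,n)=G_n/G_{n-m}$ for $m\le n$ ($G_{n-m}\subset G_n$ via $g\mapsto g\oplus\mathrm{id}_m$), empty otherwise, composition $fG_l\circ gG_m=f(\mathrm{id}_l\oplus g)G_{l+m}$, monoidal via $f_1G_{m_1}\oplus f_2G_{m_2}=(f_1\oplus f_2)(\mathrm{id}_{m_1}\oplus b^{-1}_{n_1,m_2}\oplus\mathrm{id}_{n_2})G_{m_1+m_2}$; $0$ initial, $\iota_n\colon0\to n$. $G_m=\mathrm{Aut}_{U\mathcal G}(m)$ acts on $R\mathrm{Hom}(m,-)$ from the right by precomposition, making $R\mathrm{Hom}(m,-)\otimes_{RG_m}W_m$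 a functor $U\mathcal G\to R\text{-Mod}$. For such a functor $V$ with $V_n=V(n)$, $\widetilde H_i(V)_n$ ($i\ge-1$) is the homology of $\widetilde C_p(V)_n=RG_n\otimes_{RG_{n-p-1}}V_{n-p-1}$ ($p\ge-1$, zero for $n<p+1$, $G_{n-p-1}\subset G_n$ via $g\mapsto g\oplus\mathrm{id}_{p+1}$) with differential $\sum_{i=0}^p(-1)^id_i$, $d_i(g\otimes v)=g(\mathrm{id}_{n-p-1}\oplus b_{1,i}\oplus\mathrm{id}_{p-i})\otimes V(\mathrm{id}_{n-p-1}\oplus\iota_1)(v)$. *)

theory Defs
  imports "HOL-Algebra.Group" "HOL-Library.Poly_Mapping"
begin

text \<open>G n is the group Aut(n); s m n g h is g (+) h in G (m+n); b m n is the braiding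
  b_{m,n} in G (m+n). The monoidal structure is taken to be strict (objects are the monoid
  (N,+,0), so (+) is associative and unital on the nose). Composition in the groupoid is the
  group multiplication (f o g = f * g).\<close>

definition stability_groupoid :: "(nat \<Rightarrow> 'g monoid) \<Rightarrow> (nat \<Rightarrow> nat \<Rightarrow> 'g \<Rightarrow> 'g \<Rightarrow> 'g) \<Rightarrow> bool" where
  "stability_groupoid G s \<longleftrightarrow>
     (\<forall>n. group (G n)) \<and>
     (\<forall>m n g h. g \<in> carrier (G m) \<and> h \<in> carrier (G n) \<longrightarrow> s m n g h \<in> carrier (G (m+n))) \<and>
     (\<forall>m n g g' h h'. g \<in> carrier (G m) \<and> g' \<in> carrier (G m) \<and> h \<in> carrier (G n) \<and> h' \<in> carrier (G n) \<longrightarrow>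
        s m n (g \<otimes>\<^bsub>G m\<^esub> g') (h \<otimes>\<^bsub>G n\<^esub> h') = s m n g h \<otimes>\<^bsub>G (m+n)\<^esub> s m n g' h') \<and>
     (\<forall>m n. inj_on (\<lambda>(g,h). s m n g h) (carrier (G m) \<times> carrier (G n))) \<and>
     carrier (G 0) = {\<one>\<^bsub>G 0\<^esub>} \<and>
     (\<forall>l m n f g h. f \<in> carrier (G l) \<and> g \<in> carrier (G m) \<and> h \<in> carrier (G n) \<longrightarrow>
        s (l+m) n (s l m f g) h = s l (m+n) f (s m n g h)) \<and>
     (\<forall>n h. h \<in> carrier (G n) \<longrightarrow> s 0 n \<one>\<^bsub>G 0\<^esub> h = h) \<and>
     (\<forall>m g. g \<in> carrier (G m) \<longrightarrow> s m 0 g \<one>\<^bsub>G 0\<^esub> = g) \<and>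
     (\<forall>l m n. (\<lambda>g. s (l+m) n g \<one>\<^bsub>G n\<^esub>) ` carrier (G (l+m))
               \<inter> (\<lambda>h. s l (m+n) \<one>\<^bsub>G l\<^esub> h) ` carrier (G (m+n))
             = (\<lambda>g. s l (m+n) \<one>\<^bsub>G l\<^esub> (s m n g \<one>\<^bsub>G n\<^esub>)) ` carrier (G m))"

definition braided_stability_groupoid ::
  "(nat \<Rightarrow> 'g monoid) \<Rightarrow> (nat \<Rightarrow> nat \<Rightarrow> 'g \<Rightarrow> 'g \<Rightarrow> 'g) \<Rightarrow> (nat \<Rightarrow> nat \<Rightarrow> 'g) \<Rightarrow> bool" where
  "braided_stability_groupoid G s b \<longleftrightarrow>
     stability_groupoid G s \<and>
     (\<forall>m n. b m n \<in> carrier (G (m+n))) \<and>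
     (\<forall>m n g h. g \<in> carrier (G m) \<and> h \<in> carrier (G n) \<longrightarrow>
        b m n \<otimes>\<^bsub>G (m+n)\<^esub> s m n g h = s n m h g \<otimes>\<^bsub>G (m+n)\<^esub> b m n) \<and>
     (\<forall>l m n. b l (m+n) =
        s m (l+n) \<one>\<^bsub>G m\<^esub> (b l n) \<otimes>\<^bsub>G (l+m+n)\<^esub> s (l+m) n (b l m) \<one>\<^bsub>G n\<^esub>) \<and>
     (\<forall>l m n. b (l+m) n =
        s (l+n) m (b l n) \<one>\<^bsub>G m\<^esub> \<otimes>\<^bsub>G (l+m+n)\<^esub> s l (m+n) \<one>\<^bsub>G l\<^esub> (b m n))"

definition smul :: "'r::comm_ring_1 \<Rightarrow> ('x \<Rightarrow>\<^sub>0 'r) \<Rightarrow> ('x \<Rightarrow>\<^sub>0 'r)" where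
  "smul c x = Poly_Mapping.map (\<lambda>a. c * a) x"

definition gen :: "'x \<Rightarrow> ('x \<Rightarrow>\<^sub>0 'r::comm_ring_1)" where
  "gen a = Poly_Mapping.single a 1"

definition lin_ext :: "('x \<Rightarrow> ('y \<Rightarrow>\<^sub>0 'r::comm_ring_1)) \<Rightarrow> ('x \<Rightarrow>\<^sub>0 'r) \<Rightarrow> ('y \<Rightarrow>\<^sub>0 'r)" where
  "lin_ext \<phi> x = (\<Sum>a\<in>Poly_Mapping.keys x. smul (Poly_Mapping.lookup x a) (\<phi> a))"

definition free_on :: "'x set \<Rightarrow> ('x \<Rightarrow>\<^sub>0 'r::comm_ring_1) set" where
  "free_on X = {x. Poly_Mapping.keys x \<subseteq> X}"

inductive_set rspan :: "('x \<Rightarrow>\<^sub>0 'r::comm_ring_1) set \<Rightarrow> ('x \<Rightarrow>\<^sub>0 'r) set" for S where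
  rspan_zero: "0 \<in> rspan S"
| rspan_gen: "x \<in> S \<Longrightarrow> x \<in> rspan S"
| rspan_add: "x \<in> rspan S \<Longrightarrow> y \<in> rspan S \<Longrightarrow> x + y \<in> rspan S"
| rspan_smul: "x \<in> rspan S \<Longrightarrow> smul c x \<in> rspan S"

text \<open>V_j = R[X j] / span(K j); G_j acts on the generators via act j;
  V(id_j (+) iota_1) : V_j -> V_{j+1} is induced by iota j on generators.
  Index q = p+1 >= 0. C~_p(V)_n = RG_n \<otimes>_{RG_{n-q}} V_{n-q} (zero if q > n) is presented as
  the free R-module on G_n \<times> X (n-q) modulo the balancing relations (g t, x) ~ (g, t x)
  (t in G_{n-q} embedded as t (+) id_q) and g \<otimes> K (n-q).\<close>

definition ctil_gens :: "(nat \<Rightarrow> 'g monoid) \<Rightarrow> (nat \<Rightarrow> 'x set) \<Rightarrow> nat \<Rightarrow> nat \<Rightarrow> ('g \<times> 'x) set" where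
  "ctil_gens G X n q = {(g,x). q \<le> n \<and> g \<in> carrier (G n) \<and> x \<in> X (n-q)}"

definition ctil_rels :: "(nat \<Rightarrow> 'g monoid) \<Rightarrow> (nat \<Rightarrow> nat \<Rightarrow> 'g \<Rightarrow> 'g \<Rightarrow> 'g) \<Rightarrow> (nat \<Rightarrow> 'x set)
    \<Rightarrow> (nat \<Rightarrow> ('x \<Rightarrow>\<^sub>0 'r::comm_ring_1) set) \<Rightarrow> (nat \<Rightarrow> 'g \<Rightarrow> 'x \<Rightarrow> 'x) \<Rightarrow> nat \<Rightarrow> nat
    \<Rightarrow> ('g \<times> 'x \<Rightarrow>\<^sub>0 'r) set" where
  "ctil_rels G s X K act n q = rspan
     ({gen (g \<otimes>\<^bsub>G n\<^esub> s (n-q) q t \<one>\<^bsub>G q\<^esub>, x) - gen (g, act (n-q) t x) | g t x.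
         q \<le> n \<and> g \<in> carrier (G n) \<and> t \<in> carrier (G (n-q)) \<and> x \<in> X (n-q)}
      \<union> {lin_ext (\<lambda>x. gen (g,x)) k | g k. q \<le> n \<and> g \<in> carrier (G n) \<and> k \<in> K (n-q)})"

definition ctil_face :: "(nat \<Rightarrow> 'g monoid) \<Rightarrow> (nat \<Rightarrow> nat \<Rightarrow> 'g \<Rightarrow> 'g \<Rightarrow> 'g) \<Rightarrow> (nat \<Rightarrow> nat \<Rightarrow> 'g)
    \<Rightarrow> nat \<Rightarrow> nat \<Rightarrow> nat \<Rightarrow> 'g" where
  "ctil_face G s b n q t =
     s (n-q) q \<one>\<^bsub>G (n-q)\<^esub> (s (Suc t) (q - Suc t) (b 1 t) \<one>\<^bsub>G (q - Suc t)\<^esub>)"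

definition ctil_d :: "(nat \<Rightarrow> 'g monoid) \<Rightarrow> (nat \<Rightarrow> nat \<Rightarrow> 'g \<Rightarrow> 'g \<Rightarrow> 'g) \<Rightarrow> (nat \<Rightarrow> nat \<Rightarrow> 'g)
    \<Rightarrow> (nat \<Rightarrow> 'x \<Rightarrow> 'x) \<Rightarrow> nat \<Rightarrow> nat \<Rightarrow> ('g \<times> 'x \<Rightarrow>\<^sub>0 'r::comm_ring_1) \<Rightarrow> ('g \<times> 'x \<Rightarrow>\<^sub>0 'r)" where
  "ctil_d G s b iota n q = lin_ext (\<lambda>(g,x). \<Sum>t<q.
       smul ((-1)^t) (gen (g \<otimes>\<^bsub>G n\<^esub> ctil_face G s b n q t, iota (n-q) x)))"

text \<open>H~_i(V)_n = 0 (i >= -1): every cycle in C~_i (class of x with d x = 0 in the quotient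
  C~_{i-1}) is a boundary (x - d y lies in the relation submodule of C~_i).\<close>
definition ctil_H_vanishes :: "(nat \<Rightarrow> 'g monoid) \<Rightarrow> (nat \<Rightarrow> nat \<Rightarrow> 'g \<Rightarrow> 'g \<Rightarrow> 'g) \<Rightarrow> (nat \<Rightarrow> nat \<Rightarrow> 'g)
    \<Rightarrow> (nat \<Rightarrow> 'x set) \<Rightarrow> (nat \<Rightarrow> ('x \<Rightarrow>\<^sub>0 'r::comm_ring_1) set) \<Rightarrow> (nat \<Rightarrow> 'g \<Rightarrow> 'x \<Rightarrow> 'x)
    \<Rightarrow> (nat \<Rightarrow> 'x \<Rightarrow> 'x) \<Rightarrow> int \<Rightarrow> nat \<Rightarrow> bool" where
  "ctil_H_vanishes G s b X K act iota i n \<longleftrightarrow>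
     (\<forall>x \<in> free_on (ctil_gens G X n (nat (i+1))).
        (nat (i+1) = 0 \<or> ctil_d G s b iota n (nat (i+1)) x \<in> ctil_rels G s X K act n (nat (i+1) - 1))
        \<longrightarrow> (\<exists>y \<in> free_on (ctil_gens G X n (Suc (nat (i+1)))).
               x - ctil_d G s b iota n (Suc (nat (i+1))) y \<in> ctil_rels G s X K act n (nat (i+1))))"

definition RG_module :: "'g monoid \<Rightarrow> ('r::comm_ring_1 \<Rightarrow> 'w::ab_group_add \<Rightarrow> 'w) \<Rightarrow> ('g \<Rightarrow> 'w \<Rightarrow> 'w) \<Rightarrow> bool" where
  "RG_module H sm act \<longleftrightarrow>
     (\<forall>c w w'. sm c (w + w') = sm c w + sm c w') \<and>
     (\<forall>c c' w. sm (c + c') w = sm c w + sm c' w) \<and>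
     (\<forall>c c' w. sm (c * c') w = sm c (sm c' w)) \<and>
     (\<forall>w. sm 1 w = w) \<and>
     (\<forall>h\<in>carrier H. \<forall>w w'. act h (w + w') = act h w + act h w') \<and>
     (\<forall>h\<in>carrier H. \<forall>c w. act h (sm c w) = sm c (act h w)) \<and>
     (\<forall>w. act \<one>\<^bsub>H\<^esub> w = w) \<and>
     (\<forall>h\<in>carrier H. \<forall>h'\<in>carrier H. \<forall>w. act (h \<otimes>\<^bsub>H\<^esub> h') w = act h (act h' w))"

text \<open>R Hom(m,j) \<otimes>_{RG_m} W: generators (f,w) with f in G_j representing f G_{j-m} (empty if j<m);
  relations: R-bilinearity in w, f k ~ f for k in G_{j-m} (embedded k (+) id_m), and
  (f (id_{j-m} (+) h), w) ~ (f, h w) for h in G_m (right action by precomposition).\<close>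

definition homW_gens :: "(nat \<Rightarrow> 'g monoid) \<Rightarrow> nat \<Rightarrow> nat \<Rightarrow> ('g \<times> 'w) set" where
  "homW_gens G m j = {(f,w). m \<le> j \<and> f \<in> carrier (G j)}"

definition homW_rels :: "(nat \<Rightarrow> 'g monoid) \<Rightarrow> (nat \<Rightarrow> nat \<Rightarrow> 'g \<Rightarrow> 'g \<Rightarrow> 'g)
    \<Rightarrow> ('r::comm_ring_1 \<Rightarrow> 'w::ab_group_add \<Rightarrow> 'w) \<Rightarrow> ('g \<Rightarrow> 'w \<Rightarrow> 'w) \<Rightarrow> nat \<Rightarrow> nat
    \<Rightarrow> ('g \<times> 'w \<Rightarrow>\<^sub>0 'r) set" where
  "homW_rels G s sm actW m j = (if m \<le> j then
       {gen (f, w + w') - gen (f, w) - gen (f, w') | f w w'. f \<in> carrier (G j)}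
     \<union> {gen (f, sm c w) - smul c (gen (f, w)) | f c w. f \<in> carrier (G j)}
     \<union> {gen (f \<otimes>\<^bsub>G j\<^esub> s (j-m) m k \<one>\<^bsub>G m\<^esub>, w) - gen (f, w) | f k w.
           f \<in> carrier (G j) \<and> k \<in> carrier (G (j-m))}
     \<union> {gen (f \<otimes>\<^bsub>G j\<^esub> s (j-m) m \<one>\<^bsub>G (j-m)\<^esub> h, w) - gen (f, actW h w) | f h w.
           f \<in> carrier (G j) \<and> h \<in> carrier (G m)}
     else {})"

definition homW_act :: "(nat \<Rightarrow> 'g monoid) \<Rightarrow> nat \<Rightarrow> 'g \<Rightarrow> ('g \<times> 'w) \<Rightarrow> ('g \<times> 'w)" where
  "homW_act G j t fw = (t \<otimes>\<^bsub>G j\<^esub> fst fw, snd fw)"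

text \<open>id_j (+) iota_1 = b_{j,1}^{-1} G_1 in Hom(j,j+1) (by the formula for (+) on UG);
  postcomposition: f G_{j-m} |-> b_{j,1}^{-1} (id_1 (+) f) G_{j+1-m}.\<close>
definition homW_iota :: "(nat \<Rightarrow> 'g monoid) \<Rightarrow> (nat \<Rightarrow> nat \<Rightarrow> 'g \<Rightarrow> 'g \<Rightarrow> 'g) \<Rightarrow> (nat \<Rightarrow> nat \<Rightarrow> 'g)
    \<Rightarrow> nat \<Rightarrow> ('g \<times> 'w) \<Rightarrow> ('g \<times> 'w)" where
  "homW_iota G s b j fw =
     (inv\<^bsub>G (Suc j)\<^esub> (b j 1) \<otimes>\<^bsub>G (Suc j)\<^esub> s 1 j \<one>\<^bsub>G 1\<^esub> (fst fw), snd fw)"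

end

theory Submission
  imports Defs
begin

lemma lookup_smul[simp]: "Poly_Mapping.lookup (smul c x) k = c * Poly_Mapping.lookup x k"
  by (simp add: smul_def map.rep_eq when_def)

lemma smul_add: "smul c (x + y) = smul c x + smul c y"
  by (rule poly_mapping_eqI) (simp add: lookup_add algebra_simps)
lemma smul_add2: "smul (c + d) x = smul c x + smul d x"
  by (rule poly_mapping_eqI) (simp add: lookup_add algebra_simps)
lemma smul_smul: "smul c (smul d x) = smul (c*d) x"
  by (rule poly_mapping_eqI) (simp add: algebra_simps)
lemma smul_one[simp]: "smul 1 x = x"
  by (rule poly_mapping_eqI) simp
lemma smul_zero[simp]: "smul 0 x = 0"
  by (rule poly_mapping_eqI) simp
lemma smul_zero2[simp]: "smul c 0 = 0"
  by (rule poly_mapping_eqI) simp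
lemma smul_minus_one: "smul (-1) x = - x"
  by (rule poly_mapping_eqI) (simp add: lookup_minus)
lemma smul_neg: "smul (- c) x = - smul c x"
  by (rule poly_mapping_eqI) simp
lemma smul_diff: "smul c (x - y) = smul c x - smul c y"
  by (rule poly_mapping_eqI) (simp add: lookup_minus algebra_simps)
lemma smul_uminus: "smul c (- x) = - smul c x"
  by (rule poly_mapping_eqI) (simp add: algebra_simps)
lemma smul_sum: "smul c (sum f A) = sum (\<lambda>a. smul c (f a)) A"
  by (induct A rule: infinite_finite_induct) (auto simp: smul_add)
lemma keys_smul: "Poly_Mapping.keys (smul c x) \<subseteq> Poly_Mapping.keys x"
  by (auto simp: in_keys_iff)

lemma lookup_gen: "Poly_Mapping.lookup (gen a) k = (if k = a then 1 else 0)"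
  by (simp add: gen_def lookup_single when_def)
lemma keys_gen: "Poly_Mapping.keys (gen a :: _ \<Rightarrow>\<^sub>0 'r::comm_ring_1) = {a}"
  by (simp add: gen_def)

lemma lin_ext_superset:
  assumes "finite S" "Poly_Mapping.keys x \<subseteq> S"
  shows "lin_ext \<phi> x = (\<Sum>a\<in>S. smul (Poly_Mapping.lookup x a) (\<phi> a))"
  unfolding lin_ext_def
  by (rule sum.mono_neutral_left) (use assms in \<open>auto simp: in_keys_iff\<close>)

lemma lin_ext_add: "lin_ext \<phi> (x + y) = lin_ext \<phi> x + lin_ext \<phi> y"
proof -
  let ?S = "Poly_Mapping.keys x \<union> Poly_Mapping.keys y"
  have k: "Poly_Mapping.keys (x+y) \<subseteq> ?S" by (rule keys_add)
  show ?thesis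
    by (subst (1 2 3) lin_ext_superset[of ?S]) (auto simp: k lookup_add smul_add2 sum.distrib)
qed

lemma lin_ext_zero[simp]: "lin_ext \<phi> 0 = 0"
  by (simp add: lin_ext_def)

lemma lin_ext_smul: "lin_ext \<phi> (smul c x) = smul c (lin_ext \<phi> x)"
  by (subst (1 2) lin_ext_superset[of "Poly_Mapping.keys x"])
     (auto simp: keys_smul smul_smul smul_sum)

lemma lin_ext_uminus: "lin_ext \<phi> (- x) = - lin_ext \<phi> x"
  using lin_ext_smul[of \<phi> "-1" x] by (simp add: smul_minus_one)

lemma lin_ext_diff: "lin_ext \<phi> (x - y) = lin_ext \<phi> x - lin_ext \<phi> y"
  using lin_ext_add[of \<phi> x "-y"] by (simp add: lin_ext_uminus)

lemma lin_ext_sum: "lin_ext \<phi> (sum f A) = sum (\<lambda>a. lin_ext \<phi> (f a)) A"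
  by (induct A rule: infinite_finite_induct) (auto simp: lin_ext_add)

lemma lin_ext_gen[simp]: "lin_ext \<phi> (gen a) = \<phi> a"
  by (simp add: lin_ext_def keys_gen lookup_gen)

lemma lin_ext_cong: "(\<And>a. a \<in> Poly_Mapping.keys x \<Longrightarrow> \<phi> a = \<psi> a) \<Longrightarrow> lin_ext \<phi> x = lin_ext \<psi> x"
  by (simp add: lin_ext_def)

lemma lin_ext_comp: "lin_ext \<psi> (lin_ext \<phi> x) = lin_ext (\<lambda>a. lin_ext \<psi> (\<phi> a)) x"
  unfolding lin_ext_def[of \<phi> x] lin_ext_def[of "\<lambda>a. lin_ext \<psi> (\<phi> a)" x]
  by (simp add: lin_ext_sum lin_ext_smul)

lemma lin_ext_linear_comb:
  "lin_ext \<phi> x + lin_ext \<psi> x = lin_ext (\<lambda>a. \<phi> a + \<psi> a) x"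
  "lin_ext \<phi> x - lin_ext \<psi> x = lin_ext (\<lambda>a. \<phi> a - \<psi> a) x"
  by (simp_all add: lin_ext_def smul_add smul_diff sum.distrib sum_subtractf)

lemma lin_ext_gen_id: "lin_ext gen x = x"
proof (rule poly_mapping_eqI)
  fix k
  have "Poly_Mapping.lookup (lin_ext gen x) k =
    (\<Sum>a\<in>Poly_Mapping.keys x. Poly_Mapping.lookup x a * (if k = a then 1 else 0))"
    by (simp add: lin_ext_def lookup_sum lookup_gen)
  also have "\<dots> = Poly_Mapping.lookup x k"
    by (simp add: if_distrib[where f="\<lambda>v. _ * v"] cong: if_cong)
       (auto simp: in_keys_iff)
  finally show "Poly_Mapping.lookup (lin_ext gen x) k = Poly_Mapping.lookup x k" .
qed

lemma rspan_diff: "x \<in> rspan S \<Longrightarrow> y \<in> rspan S \<Longrightarrow> x - y \<in> rspan S"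
  using rspan_add[of x S "smul (-1) y"] rspan_smul[of y S "-1"] by (simp add: smul_minus_one)
lemma rspan_uminus: "x \<in> rspan S \<Longrightarrow> - x \<in> rspan S"
  using rspan_smul[of x S "-1"] by (simp add: smul_minus_one)
lemma rspan_sum: "(\<And>a. a \<in> A \<Longrightarrow> f a \<in> rspan S) \<Longrightarrow> sum f A \<in> rspan S"
  by (induct A rule: infinite_finite_induct) (auto intro: rspan.intros)
lemma rspan_mono: assumes "S \<subseteq> rspan T" "x \<in> rspan S" shows "x \<in> rspan T"
  using assms(2) by induct (use assms(1) in \<open>auto intro: rspan.intros\<close>)

lemma lin_ext_rspan: "(\<And>a. a \<in> Poly_Mapping.keys x \<Longrightarrow> \<phi> a \<in> rspan S) \<Longrightarrow> lin_ext \<phi> x \<in> rspan S"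
  unfolding lin_ext_def by (rule rspan_sum) (auto intro: rspan.intros)

lemma lin_ext_rspan_map:
  assumes "\<And>y. y \<in> T \<Longrightarrow> lin_ext \<phi> y \<in> rspan S" "x \<in> rspan T"
  shows "lin_ext \<phi> x \<in> rspan S"
  using assms(2) by induct (auto intro: rspan.intros assms(1) simp: lin_ext_add lin_ext_smul)

lemma lin_ext_rspan_zero:
  assumes "\<And>y. y \<in> T \<Longrightarrow> lin_ext \<phi> y = 0" "x \<in> rspan T"
  shows "lin_ext \<phi> x = 0"
  using assms(2) by induct (auto simp: assms(1) lin_ext_add lin_ext_smul)

lemma free_on_gen: "a \<in> X \<Longrightarrow> gen a \<in> free_on X"
  by (simp add: free_on_def keys_gen)
lemma free_on_zero[simp]: "0 \<in> free_on X"
  by (simp add: free_on_def)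
lemma free_on_add: "x \<in> free_on X \<Longrightarrow> y \<in> free_on X \<Longrightarrow> x + y \<in> free_on X"
  using keys_add[of x y] by (auto simp: free_on_def)
lemma free_on_smul: "x \<in> free_on X \<Longrightarrow> smul c x \<in> free_on X"
  using keys_smul[of c x] by (auto simp: free_on_def)
lemma free_on_diff: "x \<in> free_on X \<Longrightarrow> y \<in> free_on X \<Longrightarrow> x - y \<in> free_on X"
  using free_on_add[of x X "smul (-1) y"] free_on_smul[of y X "-1"] by (simp add: smul_minus_one)
lemma free_on_sum: "(\<And>a. a \<in> A \<Longrightarrow> f a \<in> free_on X) \<Longrightarrow> sum f A \<in> free_on X"
  by (induct A rule: infinite_finite_induct) (auto intro: free_on_add)
lemma free_on_lin_ext: "(\<And>a. a \<in> Poly_Mapping.keys x \<Longrightarrow> \<phi> a \<in> free_on Y) \<Longrightarrow> lin_ext \<phi> x \<in> free_on Y"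
  unfolding lin_ext_def by (rule free_on_sum) (auto intro: free_on_smul)
lemma free_on_empty: "x \<in> free_on {} \<Longrightarrow> x = 0"
  by (simp add: free_on_def)
lemma free_on_keys: "x \<in> free_on X \<Longrightarrow> a \<in> Poly_Mapping.keys x \<Longrightarrow> a \<in> X"
  by (auto simp: free_on_def)



locale bsg =
  fixes G :: "nat \<Rightarrow> 'g monoid" and s :: "nat \<Rightarrow> nat \<Rightarrow> 'g \<Rightarrow> 'g \<Rightarrow> 'g" and b :: "nat \<Rightarrow> nat \<Rightarrow> 'g"
  assumes bsg: "braided_stability_groupoid G s b"
begin

abbreviation M :: "nat \<Rightarrow> 'g \<Rightarrow> 'g \<Rightarrow> 'g" where "M n x y \<equiv> x \<otimes>\<^bsub>G n\<^esub> y"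
abbreviation I :: "nat \<Rightarrow> 'g" where "I n \<equiv> \<one>\<^bsub>G n\<^esub>"
abbreviation C :: "nat \<Rightarrow> 'g set" where "C n \<equiv> carrier (G n)"
abbreviation Inv :: "nat \<Rightarrow> 'g \<Rightarrow> 'g" where "Inv n x \<equiv> inv\<^bsub>G n\<^esub> x"

lemma sg: "stability_groupoid G s" using bsg unfolding braided_stability_groupoid_def by (rule conjunct1)

lemmas sgd = sg[unfolded stability_groupoid_def]
lemmas sg_parts = sgd[THEN conjunct1]
  sgd[THEN conjunct2, THEN conjunct1]
  sgd[THEN conjunct2, THEN conjunct2, THEN conjunct1]
  sgd[THEN conjunct2, THEN conjunct2, THEN conjunct2, THEN conjunct1]
  sgd[THEN conjunct2, THEN conjunct2, THEN conjunct2, THEN conjunct2, THEN conjunct1]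
  sgd[THEN conjunct2, THEN conjunct2, THEN conjunct2, THEN conjunct2, THEN conjunct2, THEN conjunct1]
  sgd[THEN conjunct2, THEN conjunct2, THEN conjunct2, THEN conjunct2, THEN conjunct2, THEN conjunct2, THEN conjunct1]
  sgd[THEN conjunct2, THEN conjunct2, THEN conjunct2, THEN conjunct2, THEN conjunct2, THEN conjunct2, THEN conjunct2, THEN conjunct1]

lemma grp: "group (G n)" using sg_parts(1) by blast
lemma mon: "monoid (G n)" using grp group.is_monoid by blast

lemma m_closed[simp,intro]: "x \<in> C n \<Longrightarrow> y \<in> C n \<Longrightarrow> M n x y \<in> C n"
  by (rule monoid.m_closed[OF mon])
lemma one_closed[simp,intro]: "I n \<in> C n" by (rule monoid.one_closed[OF mon])
lemma inv_closed[simp,intro]: "x \<in> C n \<Longrightarrow> Inv n x \<in> C n" by (rule group.inv_closed[OF grp])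
lemma m_assoc: "x \<in> C n \<Longrightarrow> y \<in> C n \<Longrightarrow> z \<in> C n \<Longrightarrow> M n (M n x y) z = M n x (M n y z)"
  by (rule monoid.m_assoc[OF mon])
lemma l_one[simp]: "x \<in> C n \<Longrightarrow> M n (I n) x = x" by (rule monoid.l_one[OF mon])
lemma r_one[simp]: "x \<in> C n \<Longrightarrow> M n x (I n) = x" by (rule monoid.r_one[OF mon])
lemma l_inv[simp]: "x \<in> C n \<Longrightarrow> M n (Inv n x) x = I n" by (rule group.l_inv[OF grp])
lemma r_inv[simp]: "x \<in> C n \<Longrightarrow> M n x (Inv n x) = I n" by (rule group.r_inv[OF grp])
lemma inv_mult: "x \<in> C n \<Longrightarrow> y \<in> C n \<Longrightarrow> Inv n (M n x y) = M n (Inv n y) (Inv n x)"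
  by (rule group.inv_mult_group[OF grp])
lemma inv_inv[simp]: "x \<in> C n \<Longrightarrow> Inv n (Inv n x) = x" by (rule group.inv_inv[OF grp])
lemma inv_one[simp]: "Inv n (I n) = I n" by (rule monoid.inv_one[OF mon])
lemma l_cancel: "x \<in> C n \<Longrightarrow> y \<in> C n \<Longrightarrow> z \<in> C n \<Longrightarrow> (M n x y = M n x z) = (y = z)"
  using monoid.Units_l_cancel[OF mon, of x n y z] group.Units_eq[OF grp, of n] by simp
lemma r_cancel: "x \<in> C n \<Longrightarrow> y \<in> C n \<Longrightarrow> z \<in> C n \<Longrightarrow> (M n y x = M n z x) = (y = z)"
  by (rule group.right_cancel[OF grp])

lemma s_closed[simp,intro]: "g \<in> C m \<Longrightarrow> h \<in> C n \<Longrightarrow> s m n g h \<in> C (m+n)"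
  using sg_parts(2) by simp
lemma s_mult: "g \<in> C m \<Longrightarrow> g' \<in> C m \<Longrightarrow> h \<in> C n \<Longrightarrow> h' \<in> C n \<Longrightarrow>
   s m n (M m g g') (M n h h') = M (m+n) (s m n g h) (s m n g' h')"
  using sg_parts(3) by simp
lemma s_inj: "g \<in> C m \<Longrightarrow> g' \<in> C m \<Longrightarrow> h \<in> C n \<Longrightarrow> h' \<in> C n \<Longrightarrow>
   s m n g h = s m n g' h' \<Longrightarrow> g = g' \<and> h = h'"
  using inj_onD[OF sg_parts(4)[rule_format, of m n], of "(g,h)" "(g',h')"] by simp
lemma G0: "C 0 = {I 0}" using sg_parts(5) .
lemma s_assoc: "f \<in> C l \<Longrightarrow> g \<in> C m \<Longrightarrow> h \<in> C n \<Longrightarrow>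
        s (l+m) n (s l m f g) h = s l (m+n) f (s m n g h)"
  using sg_parts(6) by simp
lemma s_lunit: "h \<in> C n \<Longrightarrow> s 0 n (I 0) h = h"
  using sg_parts(7) by simp
lemma s_runit: "g \<in> C m \<Longrightarrow> s m 0 g (I 0) = g"
  using sg_parts(8) by simp

lemmas bsgd = bsg[unfolded braided_stability_groupoid_def]
lemmas bsg_parts = bsgd[THEN conjunct2, THEN conjunct1]
  bsgd[THEN conjunct2, THEN conjunct2, THEN conjunct1]
  bsgd[THEN conjunct2, THEN conjunct2, THEN conjunct2, THEN conjunct1]
  bsgd[THEN conjunct2, THEN conjunct2, THEN conjunct2, THEN conjunct2]

lemma b_closed[simp,intro]: "b m n \<in> C (m+n)"
  using bsg_parts(1) by simp
lemma b_nat: "g \<in> C m \<Longrightarrow> h \<in> C n \<Longrightarrow> M (m+n) (b m n) (s m n g h) = M (m+n) (s n m h g) (b m n)"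
  using bsg_parts(2) by simp
lemma b_hex1: "b l (m+n) = M (l+m+n) (s m (l+n) (I m) (b l n)) (s (l+m) n (b l m) (I n))"
  by (rule bsg_parts(3)[rule_format])
lemma b_hex2: "b (l+m) n = M (l+m+n) (s (l+n) m (b l n) (I m)) (s l (m+n) (I l) (b m n))"
  by (rule bsg_parts(4)[rule_format])

lemma s_one[simp]: "s m n (I m) (I n) = I (m+n)"
proof -
  have "M (m+n) (s m n (I m) (I n)) (s m n (I m) (I n)) = s m n (I m) (I n)"
    using s_mult[of "I m" m "I m" "I n" n "I n"] by simp
  moreover have x: "s m n (I m) (I n) \<in> C (m+n)" by (rule s_closed) simp_all
  ultimately show ?thesis
    using group.l_cancel_one[OF grp x x] by blast
qed


lemma s_inv: "g \<in> C m \<Longrightarrow> h \<in> C n \<Longrightarrow> s m n (Inv m g) (Inv n h) = Inv (m+n) (s m n g h)"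
proof -
  assume a: "g \<in> C m" "h \<in> C n"
  have "M (m+n) (s m n (Inv m g) (Inv n h)) (s m n g h) = I (m+n)"
    using s_mult[of "Inv m g" m g "Inv n h" n h] a by simp
  then show ?thesis using a
    by (metis group.inv_equality[OF grp] inv_closed s_closed)
qed

lemma s_split: "g \<in> C m \<Longrightarrow> h \<in> C n \<Longrightarrow> s m n g h = M (m+n) (s m n g (I n)) (s m n (I m) h)"
  using s_mult[of g m "I m" "I n" n h] by simp
lemma s_split2: "g \<in> C m \<Longrightarrow> h \<in> C n \<Longrightarrow> s m n g h = M (m+n) (s m n (I m) h) (s m n g (I n))"
  using s_mult[of "I m" m g h n "I n"] by simp

text \<open>placement of x (in G w) at position p inside G N\<close>
definition pl :: "nat \<Rightarrow> nat \<Rightarrow> nat \<Rightarrow> 'g \<Rightarrow> 'g" where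
  "pl N p w x = s p (N-p) (I p) (s w (N-p-w) x (I (N-p-w)))"

lemma pl_closed[simp,intro]: assumes "p + w \<le> N" "x \<in> C w" shows "pl N p w x \<in> C N"
proof -
  have e: "w + (N-p-w) = N - p" "p + (N-p) = N" using assms by auto
  have "s w (N-p-w) x (I (N-p-w)) \<in> C (N-p)" using s_closed[OF assms(2), of "I (N-p-w)" "N-p-w"] e by simp
  then show ?thesis unfolding pl_def using s_closed[of "I p" p _ "N-p"] e by simp
qed

lemma pl_mult: assumes "p + w \<le> N" "x \<in> C w" "y \<in> C w"
  shows "M N (pl N p w x) (pl N p w y) = pl N p w (M w x y)"
proof -
  have e: "w + (N-p-w) = N - p" "p + (N-p) = N" using assms by auto
  have 1: "s w (N-p-w) (M w x y) (I (N-p-w)) = M (N-p) (s w (N-p-w) x (I (N-p-w))) (s w (N-p-w) y (I (N-p-w)))"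
    using s_mult[of x w y "I (N-p-w)" "N-p-w" "I (N-p-w)"] assms e by simp
  have 2: "s p (N-p) (I p) (M (N-p) u v) = M N (s p (N-p) (I p) u) (s p (N-p) (I p) v)"
    if "u \<in> C (N-p)" "v \<in> C (N-p)" for u v
    using s_mult[of "I p" p "I p" u "N-p" v] that e by simp
  have 3: "s w (N-p-w) z (I (N-p-w)) \<in> C (N-p)" if "z \<in> C w" for z
    using s_closed[OF that, of "I (N-p-w)" "N-p-w"] e by simp
  show ?thesis unfolding pl_def 1 using 2 3 assms by simp
qed

lemma pl_one[simp]: "p + w \<le> N \<Longrightarrow> pl N p w (I w) = I N"
  unfolding pl_def by simp

lemma pl_inv: assumes "p + w \<le> N" "x \<in> C w" shows "pl N p w (Inv w x) = Inv N (pl N p w x)"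
proof -
  have "M N (pl N p w (Inv w x)) (pl N p w x) = I N" using assms by (simp add: pl_mult)
  then show ?thesis using assms by (metis group.inv_equality[OF grp] inv_closed pl_closed)
qed

lemma pl_base: assumes "x \<in> C w" shows "pl w 0 w x = x"
  unfolding pl_def using assms by (simp add: s_lunit s_runit)

lemma pl_left: assumes "x \<in> C j" shows "s j k x (I k) = pl (j+k) 0 j x"
  unfolding pl_def using assms by (simp add: s_lunit)

lemma pl_right: assumes "y \<in> C k" shows "s j k (I j) y = pl (j+k) j k y"
  unfolding pl_def using assms by (simp add: s_runit)

lemma pl_nest: assumes "q + v \<le> w" "p + w \<le> N" "x \<in> C v"
  shows "pl N p w (pl w q v x) = pl N (p+q) v x"
proof -
  define R where "R = N - p - w"
  define r where "r = w - q - v"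
  have vr: "v + r = w - q" using assms unfolding r_def by auto
  have e1: "s (w-q) R (s v r x (I r)) (I R) = s v (r+R) x (I (r+R))"
    using s_assoc[of x v "I r" r "I R" R] assms vr by simp
  have g: "s v r x (I r) \<in> C (w - q)" using s_closed[OF assms(3), of "I r" r] vr by simp
  have e2: "s w R (pl w q v x) (I R) = s q (w-q+R) (I q) (s v (r+R) x (I (r+R)))"
    using s_assoc[of "I q" q "s v r x (I r)" "w-q" "I R" R] assms g e1
    unfolding pl_def r_def[symmetric] by simp
  have Z: "s v (r+R) x (I (r+R)) \<in> C (w-q+R)"
  proof -
    have eqZ: "v + (r+R) = w - q + R" using vr by simp
    show ?thesis using s_closed[OF assms(3), of "I (r+R)" "r+R"] unfolding eqZ by simp
  qed
  have e3: "s p (N-p) (I p) (s q (w-q+R) (I q) (s v (r+R) x (I (r+R))))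
          = s (p+q) (w-q+R) (I (p+q)) (s v (r+R) x (I (r+R)))"
    using s_assoc[of "I p" p "I q" q "s v (r+R) x (I (r+R))" "w-q+R"] Z assms
    unfolding R_def by simp
  have e4: "N - (p+q) = w - q + R" "N - (p + q) - v = r + R" "w - q + R - v = r + R"
    using assms unfolding R_def r_def by auto
  show ?thesis
    unfolding pl_def[of N p w] R_def[symmetric] e2 e3
    unfolding pl_def[of N "p+q"] e4 ..
qed

lemma pl_s: assumes "p + (j + k) \<le> N" "x \<in> C j" "y \<in> C k"
  shows "pl N p (j+k) (s j k x y) = M N (pl N p j x) (pl N (p+j) k y)"
    and "pl N p (j+k) (s j k x y) = M N (pl N (p+j) k y) (pl N p j x)"
proof -
  have a: "pl N p (j+k) (s j k x (I k)) = pl N p j x"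
    using pl_nest[of 0 j "j+k" p N x] assms by (simp add: pl_left)
  have c: "pl N p (j+k) (s j k (I j) y) = pl N (p+j) k y"
    using pl_nest[of j k "j+k" p N y] assms by (simp add: pl_right)
  have cl: "s j k x (I k) \<in> C (j+k)" "s j k (I j) y \<in> C (j+k)" using assms by auto
  show "pl N p (j+k) (s j k x y) = M N (pl N p j x) (pl N (p+j) k y)"
    unfolding s_split[OF assms(2,3)] a[symmetric] c[symmetric]
    using pl_mult[OF _ cl] assms by simp
  show "pl N p (j+k) (s j k x y) = M N (pl N (p+j) k y) (pl N p j x)"
    unfolding s_split2[OF assms(2,3)] a[symmetric] c[symmetric]
    using pl_mult[OF _ cl(2) cl(1)] assms by simp
qed

lemma pl_extend: assumes "p + (j + k) \<le> N" "x \<in> C j"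
  shows "pl N p (j+k) (s j k x (I k)) = pl N p j x"
  using pl_s(1)[OF assms one_closed] assms by simp

lemma pl_comm: assumes "p + w \<le> p'" "p' + w' \<le> N" "x \<in> C w" "y \<in> C w'"
  shows "M N (pl N p w x) (pl N p' w' y) = M N (pl N p' w' y) (pl N p w x)"
proof -
  define d where "d = p' - (p + w)"
  have x': "s w d x (I d) \<in> C (w+d)" using assms by auto
  have 1: "pl N p (w+d) (s w d x (I d)) = pl N p w x"
    by (rule pl_extend) (use assms d_def in auto)
  have 2: "p + (w + d) = p'" using assms d_def by auto
  have "M N (pl N p (w+d) (s w d x (I d))) (pl N (p+(w+d)) w' y) = M N (pl N (p+(w+d)) w' y) (pl N p (w+d) (s w d x (I d)))"
    using pl_s[of p "w+d" w' N "s w d x (I d)" y] x' assms 2 by simp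
  then show ?thesis unfolding 1 2 .
qed

end

context bsg
begin

lemma pl_idx: "w = w' \<Longrightarrow> pl N p w x = pl N p w' x" by simp

lemma pl_hex1: assumes "W = l+(m+n)" "W1 = l+n" "W2 = l+m" "P1 = p+m" "K = m+n" "p + W \<le> N"
  shows "pl N p W (b l K) = M N (pl N P1 W1 (b l n)) (pl N p W2 (b l m))"
proof -
  have e: "l+m+n = l+(m+n)" by simp
  have h: "b l (m+n) = M (l+(m+n)) (s m (l+n) (I m) (b l n)) (s (l+m) n (b l m) (I n))"
    using b_hex1[of l m n] unfolding e .
  have A: "s m (l+n) (I m) (b l n) \<in> C (l+(m+n))"
    using s_closed[of "I m" m "b l n" "l+n"] by (simp add: ac_simps)
  have B: "s (l+m) n (b l m) (I n) \<in> C (l+(m+n))"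
    using s_closed[of "b l m" "l+m" "I n" n] by (simp add: ac_simps)
  have 1: "pl N p (l+(m+n)) (s m (l+n) (I m) (b l n)) = pl N (p+m) (l+n) (b l n)"
    using pl_s(1)[of p m "l+n" N "I m" "b l n"] assms by (simp add: ac_simps)
  have 2: "pl N p (l+(m+n)) (s (l+m) n (b l m) (I n)) = pl N p (l+m) (b l m)"
    using pl_extend[of p "l+m" n N "b l m"] assms by (simp add: ac_simps)
  show ?thesis unfolding assms(1-5) h
    using pl_mult[OF _ A B, of p N, symmetric] assms 1 2 by simp
qed

lemma pl_hex2: assumes "W = l+(m+n)" "W1 = l+n" "W2 = m+n" "P2 = p+l" "K = l+m" "p + W \<le> N"
  shows "pl N p W (b K n) = M N (pl N p W1 (b l n)) (pl N P2 W2 (b m n))"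
proof -
  have e: "l+m+n = l+(m+n)" by simp
  have h: "b (l+m) n = M (l+(m+n)) (s (l+n) m (b l n) (I m)) (s l (m+n) (I l) (b m n))"
    using b_hex2[of l m n] unfolding e .
  have A: "s (l+n) m (b l n) (I m) \<in> C (l+(m+n))"
    using s_closed[of "b l n" "l+n" "I m" m] by (simp add: ac_simps)
  have B: "s l (m+n) (I l) (b m n) \<in> C (l+(m+n))"
    using s_closed[of "I l" l "b m n" "m+n"] by (simp add: ac_simps)
  have 1: "pl N p (l+(m+n)) (s (l+n) m (b l n) (I m)) = pl N p (l+n) (b l n)"
    using pl_extend[of p "l+n" m N "b l n"] assms by (simp add: ac_simps)
  have 2: "pl N p (l+(m+n)) (s l (m+n) (I l) (b m n)) = pl N (p+l) (m+n) (b m n)"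
    using pl_s(1)[of p l "m+n" N "I l" "b m n"] assms by (simp add: ac_simps)
  show ?thesis unfolding assms(1-5) h
    using pl_mult[OF _ A B, of p N, symmetric] assms 1 2 by simp
qed

lemma pl_nat: assumes "W = j+k" "P = p+j" "P' = p+k" "p + W \<le> N" "g \<in> C j" "h \<in> C k"
  shows "M N (pl N p W (b j k)) (M N (pl N p j g) (pl N P k h)) =
         M N (M N (pl N p k h) (pl N P' j g)) (pl N p W (b j k))"
proof -
  have n: "M (j+k) (b j k) (s j k g h) = M (j+k) (s k j h g) (b j k)" using b_nat assms by blast
  have c1: "s j k g h \<in> C (j+k)" "s k j h g \<in> C (j+k)" using assms s_closed[of h k g j] by (auto simp: ac_simps)
  have 1: "pl N p (j+k) (s j k g h) = M N (pl N p j g) (pl N (p+j) k h)"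
    using pl_s(1)[of p j k N g h] assms by simp
  have 2: "pl N p (j+k) (s k j h g) = M N (pl N p k h) (pl N (p+k) j g)"
    using pl_s(1)[of p k j N h g] assms by (simp add: ac_simps)
  have "pl N p (j+k) (M (j+k) (b j k) (s j k g h)) = pl N p (j+k) (M (j+k) (s k j h g) (b j k))"
    using n by simp
  then show ?thesis unfolding assms(1-3) 1[symmetric] 2[symmetric] using assms c1 pl_mult[of p "j+k" N] by simp
qed


lemma cancel_r[simp]: "x \<in> C n \<Longrightarrow> z \<in> C n \<Longrightarrow> M n (M n x z) (Inv n z) = x"
  by (simp add: m_assoc)
lemma cancel_r2[simp]: "x \<in> C n \<Longrightarrow> z \<in> C n \<Longrightarrow> M n (M n x (Inv n z)) z = x"
  by (simp add: m_assoc)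
lemma b_closed_eq[simp]: "m + k = w \<Longrightarrow> b m k \<in> C w" using b_closed[of m k] by simp
lemma b1_closed[simp,intro]: "b 1 t \<in> C (Suc t)" using b_closed[of 1 t] by simp
lemma b_1_closed[simp,intro]: "b m 1 \<in> C (Suc m)" using b_closed[of m 1] by simp

lemma I2: assumes "n = l + m + L" "t < L"
 shows "M n (M n (pl n l (m+L) (b m L)) (pl n (l+m) (Suc t) (b 1 t))) (pl n 0 (Suc (l+m)) (Inv (Suc (l+m)) (b (l+m) 1)))
   = M n (M n (pl n l (Suc t) (b 1 t)) (pl n (Suc l) (m + (L - 1)) (b m (L - 1)))) (pl n 0 (Suc l) (Inv (Suc l) (b l 1)))"
proof -
  define r where "r = L - Suc t"
  define bt where "bt = pl n l (Suc t) (b 1 t)"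
  define F where "F = pl n (l+m) (Suc t) (b 1 t)"
  define A where "A = pl n (l + Suc t) (m + r) (b m r)"
  define Bst where "Bst = pl n l (m + Suc t) (b m (Suc t))"
  define Y where "Y = pl n (Suc l) (m+t) (b m t)"
  define Z where "Z = pl n l (Suc m) (b m 1)"
  define Kl where "Kl = pl n 0 (Suc l) (b l 1)"
  have Lr: "L = Suc t + r" using assms r_def by simp
  have cl: "bt \<in> C n" "F \<in> C n" "A \<in> C n" "Bst \<in> C n" "Y \<in> C n" "Z \<in> C n" "Kl \<in> C n"
    unfolding bt_def F_def A_def Bst_def Y_def Z_def Kl_def using assms Lr by (auto intro!: pl_closed)
  have hQ: "pl n l (m+L) (b m L) = M n A Bst"
    unfolding A_def Bst_def by (rule pl_hex1) (use assms Lr in auto)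
  have hB: "Bst = M n Y Z"
    unfolding Y_def Z_def Bst_def by (rule pl_hex1) (use assms Lr in auto)
  have hN: "M n Bst F = M n bt Bst"
  proof -
    have "M n (pl n l (m + Suc t) (b m (Suc t))) (M n (pl n l m (I m)) (pl n (l+m) (Suc t) (b 1 t))) =
         M n (M n (pl n l (Suc t) (b 1 t)) (pl n (l + Suc t) m (I m))) (pl n l (m + Suc t) (b m (Suc t)))"
      by (rule pl_nat) (use assms Lr in auto)
    then show ?thesis unfolding Bst_def F_def bt_def using assms cl Lr by simp
  qed
  have hK0: "pl n 0 (Suc (l+m)) (b (l+m) 1) = M n Kl Z"
    unfolding Kl_def Z_def by (rule pl_hex2) (use assms Lr in auto)
  have hK: "pl n 0 (Suc (l+m)) (Inv (Suc (l+m)) (b (l+m) 1)) = M n (Inv n Z) (Inv n Kl)"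
    using pl_inv[of 0 "Suc (l+m)" n "b (l+m) 1"] hK0 assms cl b_closed[of "l+m" 1] by (simp add: inv_mult)
  have hQ': "pl n (Suc l) (m+(L-1)) (b m (L-1)) = M n A Y"
    unfolding A_def Y_def by (rule pl_hex1) (use assms Lr in auto)
  have hKi: "pl n 0 (Suc l) (Inv (Suc l) (b l 1)) = Inv n Kl"
    unfolding Kl_def using pl_inv[of 0 "Suc l" n "b l 1"] assms by simp
  have hc: "M n A bt = M n bt A"
    unfolding A_def bt_def by (rule pl_comm[symmetric]) (use assms Lr in auto)
  have "M n (M n (M n A Bst) F) (M n (Inv n Z) (Inv n Kl)) = M n (M n (M n A bt) Bst) (M n (Inv n Z) (Inv n Kl))"
    using cl hN by (simp add: m_assoc)
  also have "\<dots> = M n (M n (M n bt A) (M n Y Z)) (M n (Inv n Z) (Inv n Kl))"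
    using hc hB by simp
  also have "\<dots> = M n (M n bt (M n A Y)) (Inv n Kl)"
    using cl by (simp add: m_assoc[symmetric])
  finally show ?thesis unfolding hQ hK hQ' hKi bt_def[symmetric] F_def[symmetric] .
qed


lemma I1: assumes "p + L \<le> n" "t \<le> t'" "Suc (Suc t') \<le> L"
 shows "M n (pl n p (Suc (Suc t')) (b 1 (Suc t'))) (pl n (Suc p) (Suc t) (b 1 t))
      = M n (M n (pl n p (Suc t) (b 1 t)) (pl n (Suc p) (Suc t') (b 1 t'))) (pl n p 2 (b 1 1))"
proof -
  define u where "u = t' - t"
  have tu: "t' = t + u" using assms u_def by simp
  define X1 where "X1 = pl n (p + Suc t) (Suc u) (b 1 u)"
  define T where "T = pl n p (Suc t) (b 1 t)"
  define S where "S = pl n (p+t) 2 (b 1 1)"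
  define V where "V = pl n (Suc p) (Suc t) (b 1 t)"
  define B2 where "B2 = pl n p (Suc (Suc t)) (b 2 t)"
  define E where "E = pl n p 2 (b 1 1)"
  define W where "W = pl n p (Suc (Suc t)) (b 1 (Suc t))"
  have cl: "X1 \<in> C n" "T \<in> C n" "S \<in> C n" "V \<in> C n" "B2 \<in> C n" "E \<in> C n" "W \<in> C n"
    unfolding X1_def T_def S_def V_def B2_def E_def W_def using assms tu by (auto intro!: pl_closed)
  have h1: "pl n p (Suc (Suc t')) (b 1 (Suc t')) = M n X1 W"
    unfolding X1_def W_def by (rule pl_hex1) (use assms tu in auto)
  have h2: "W = M n S T"
    unfolding W_def S_def T_def by (rule pl_hex1) (use assms tu in auto)
  have h3: "B2 = M n T V"
    unfolding B2_def T_def V_def by (rule pl_hex2) (use assms tu in auto)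
  have h4: "M n B2 E = M n S B2"
  proof -
    have "M n (pl n p (Suc (Suc t)) (b 2 t)) (M n (pl n p 2 (b 1 1)) (pl n (p+2) t (I t))) =
          M n (M n (pl n p t (I t)) (pl n (p+t) 2 (b 1 1))) (pl n p (Suc (Suc t)) (b 2 t))"
      by (rule pl_nat) (use assms tu in auto)
    then show ?thesis unfolding B2_def E_def S_def using assms tu cl by simp
  qed
  have h5: "pl n (Suc p) (Suc t') (b 1 t') = M n X1 V"
    unfolding X1_def V_def by (rule pl_hex1) (use assms tu in auto)
  have hc: "M n T X1 = M n X1 T"
    unfolding X1_def T_def by (rule pl_comm) (use assms tu in auto)
  have "M n (M n X1 W) V = M n X1 (M n S B2)"
    unfolding h2 h3 using cl by (simp add: m_assoc)
  also have "\<dots> = M n X1 (M n B2 E)" using h4 by simp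
  also have "\<dots> = M n (M n T (M n X1 V)) E"
    unfolding h3 using cl hc by (simp add: m_assoc[symmetric])
  finally show ?thesis unfolding h1 h5 T_def[symmetric] V_def[symmetric] E_def[symmetric] .
qed
end

context bsg
begin

abbreviation d0 :: "nat \<Rightarrow> nat \<Rightarrow> ('g \<times> unit \<Rightarrow>\<^sub>0 'r::comm_ring_1) \<Rightarrow> ('g \<times> unit \<Rightarrow>\<^sub>0 'r)"
  where "d0 \<nu> q \<equiv> ctil_d G s b (\<lambda>j x. x) \<nu> q"
abbreviation rel0 :: "nat \<Rightarrow> nat \<Rightarrow> ('g \<times> unit \<Rightarrow>\<^sub>0 'r::comm_ring_1) set"
  where "rel0 \<nu> q \<equiv> ctil_rels G s (\<lambda>j. UNIV :: unit set) (\<lambda>j. {} :: (unit \<Rightarrow>\<^sub>0 'r) set) (\<lambda>j t x. x) \<nu> q"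
abbreviation gens0 :: "nat \<Rightarrow> nat \<Rightarrow> ('g \<times> unit) set"
  where "gens0 \<nu> q \<equiv> ctil_gens G (\<lambda>j. UNIV :: unit set) \<nu> q"

lemma rels_sum: "(\<And>a. a \<in> A \<Longrightarrow> f a \<in> ctil_rels G s X K act \<nu> q) \<Longrightarrow> sum f A \<in> ctil_rels G s X K act \<nu> q"
  unfolding ctil_rels_def by (rule rspan_sum)
lemma rels_add: "x \<in> ctil_rels G s X K act \<nu> q \<Longrightarrow> y \<in> ctil_rels G s X K act \<nu> q \<Longrightarrow> x + y \<in> ctil_rels G s X K act \<nu> q"
  unfolding ctil_rels_def by (rule rspan_add)
lemma rels_diff: "x \<in> ctil_rels G s X K act \<nu> q \<Longrightarrow> y \<in> ctil_rels G s X K act \<nu> q \<Longrightarrow> x - y \<in> ctil_rels G s X K act \<nu> q"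
  unfolding ctil_rels_def by (rule rspan_diff)
lemma rels_smul: "x \<in> ctil_rels G s X K act \<nu> q \<Longrightarrow> smul c x \<in> ctil_rels G s X K act \<nu> q"
  unfolding ctil_rels_def by (rule rspan_smul)
lemma rels_uminus: "x \<in> ctil_rels G s X K act \<nu> q \<Longrightarrow> - x \<in> ctil_rels G s X K act \<nu> q"
  unfolding ctil_rels_def by (rule rspan_uminus)
lemma rels_zero[simp]: "0 \<in> ctil_rels G s X K act \<nu> q"
  unfolding ctil_rels_def by (rule rspan_zero)

lemma face_pl: "t < q \<Longrightarrow> q \<le> \<nu> \<Longrightarrow> ctil_face G s b \<nu> q t = pl \<nu> (\<nu> - q) (Suc t) (b 1 t)"
  unfolding ctil_face_def pl_def by simp

lemma face_closed[simp,intro]: "t < q \<Longrightarrow> q \<le> \<nu> \<Longrightarrow> ctil_face G s b \<nu> q t \<in> C \<nu>"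
  by (simp add: face_pl)

lemma gens0_iff[simp]: "(g, x) \<in> gens0 \<nu> q \<longleftrightarrow> q \<le> \<nu> \<and> g \<in> C \<nu>"
  by (simp add: ctil_gens_def)

lemma d_gen: "ctil_d G s b io \<nu> q (gen (g, x)) = (\<Sum>t<q. smul ((-1)^t) (gen (M \<nu> g (ctil_face G s b \<nu> q t), io (\<nu>-q) x)))"
  unfolding ctil_d_def by simp
lemma d_sum: "ctil_d G s b io \<nu> q (sum f A) = (\<Sum>a\<in>A. ctil_d G s b io \<nu> q (f a))"
  unfolding ctil_d_def by (rule lin_ext_sum)
lemma d_smul: "ctil_d G s b io \<nu> q (smul c x) = smul c (ctil_d G s b io \<nu> q x)"
  unfolding ctil_d_def by (rule lin_ext_smul)
lemma d_add: "ctil_d G s b io \<nu> q (x + y) = ctil_d G s b io \<nu> q x + ctil_d G s b io \<nu> q y"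
  unfolding ctil_d_def by (rule lin_ext_add)
lemma d_diff: "ctil_d G s b io \<nu> q (x - y) = ctil_d G s b io \<nu> q x - ctil_d G s b io \<nu> q y"
  unfolding ctil_d_def by (rule lin_ext_diff)
lemma d_zero[simp]: "ctil_d G s b io \<nu> q 0 = 0"
  unfolding ctil_d_def by simp

lemma lift_pl: "k \<in> C (\<nu> - q) \<Longrightarrow> q \<le> \<nu> \<Longrightarrow> s (\<nu>-q) q k (I q) = pl \<nu> 0 (\<nu>-q) k"
  using pl_left[of k "\<nu>-q" q] by simp

lemma rel0_gen: assumes "q \<le> \<nu>" "g \<in> C \<nu>" "k \<in> C (\<nu> - q)"
  shows "gen (M \<nu> g (pl \<nu> 0 (\<nu>-q) k), x) - gen (g, x) \<in> rel0 \<nu> q"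
  unfolding ctil_rels_def
proof (rule rspan_gen, rule UnI1, rule CollectI, intro exI conjI)
  show "gen (M \<nu> g (pl \<nu> 0 (\<nu>-q) k), x) - gen (g, x) =
    gen (M \<nu> g (s (\<nu>-q) q k (I q)), x) - gen (g, (\<lambda>j t x. x) (\<nu>-q) k x)"
    using lift_pl[OF assms(3,1)] by simp
qed (use assms in auto)

lemma d0_sq: assumes "2 \<le> q" "q \<le> \<nu>" "g \<in> C \<nu>"
  shows "d0 \<nu> (q-1) (d0 \<nu> q (gen (g, x))) \<in> (rel0 \<nu> (q-2) :: ('g \<times> unit \<Rightarrow>\<^sub>0 'r::comm_ring_1) set)"
proof -
  define p where "p = \<nu> - q"
  define F where "F t = pl \<nu> p (Suc t) (b 1 t)" for t
  define F' where "F' t = pl \<nu> (Suc p) (Suc t) (b 1 t)" for t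
  define E where "E = pl \<nu> p 2 (b 1 1)"
  define f :: "nat \<times> nat \<Rightarrow> ('g \<times> unit \<Rightarrow>\<^sub>0 'r)" where
    "f = (\<lambda>(t,t'). smul ((-1)^(t+t')) (gen (M \<nu> (M \<nu> g (F t)) (F' t'), x)))"
  have fc: "ctil_face G s b \<nu> q t = F t" if "t < q" for t
    using face_pl[OF that assms(2)] unfolding F_def p_def .
  have fc': "ctil_face G s b \<nu> (q-1) t = F' t" if "t < q - 1" for t
  proof -
    have "ctil_face G s b \<nu> (q-1) t = pl \<nu> (\<nu> - (q-1)) (Suc t) (b 1 t)" using face_pl that assms by simp
    also have "\<nu> - (q-1) = Suc p" using assms p_def by simp
    finally show ?thesis unfolding F'_def .
  qed
  have Fc: "F t \<in> C \<nu>" if "t < q" for t using that assms unfolding F_def p_def by (auto intro!: pl_closed)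
  have F'c: "F' t \<in> C \<nu>" if "t < q - 1" for t using that assms unfolding F'_def p_def by (auto intro!: pl_closed)
  have Ec: "E \<in> C \<nu>" using assms unfolding E_def p_def by (auto intro!: pl_closed)
  have "d0 \<nu> (q-1) (d0 \<nu> q (gen (g, x))) = (\<Sum>t<q. \<Sum>t'<q-1. f (t,t'))"
    unfolding d_gen d_sum d_smul
    apply (simp add: smul_sum smul_smul f_def power_add)
    apply (rule sum.cong[OF refl], rule sum.cong[OF refl])
    using fc fc' by (simp add: mult.commute)
  also have "\<dots> = sum f ({..<q} \<times> {..<q-1})" by (simp add: sum.cartesian_product)
  also have "\<dots> = sum f {(t,t'). t < q \<and> t' < q-1 \<and> t \<le> t'} + sum f {(t,t'). t < q \<and> t' < q-1 \<and> t' < t}"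
  proof -
    let ?A = "{(t,t'). t < q \<and> t' < q-1 \<and> t \<le> t'}" and ?B = "{(t,t'). t < q \<and> t' < q-1 \<and> t' < t}"
    have eq: "{..<q} \<times> {..<q-1} = ?A \<union> ?B" by auto
    have fin: "finite ?A" "finite ?B"
      by (rule finite_subset[of _ "{..<q} \<times> {..<q-1}"], auto)+
    show ?thesis unfolding eq by (rule sum.union_disjoint) (use fin in auto)
  qed
  also have "sum f {(t,t'). t < q \<and> t' < q-1 \<and> t' < t} = sum (\<lambda>(t,t'). f (Suc t', t)) {(t,t'). t < q \<and> t' < q-1 \<and> t \<le> t'}"
  proof -
    have "{(t,t'). t < q \<and> t' < q-1 \<and> t' < t} = (\<lambda>(t,t'). (Suc t', t)) ` {(t,t'). t < q \<and> t' < q-1 \<and> t \<le> t'}"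
    proof
      show "(\<lambda>(t,t'). (Suc t', t)) ` {(t,t'). t < q \<and> t' < q-1 \<and> t \<le> t'} \<subseteq> {(t,t'). t < q \<and> t' < q-1 \<and> t' < t}"
        by auto
      show "{(t,t'). t < q \<and> t' < q-1 \<and> t' < t} \<subseteq> (\<lambda>(t,t'). (Suc t', t)) ` {(t,t'). t < q \<and> t' < q-1 \<and> t \<le> t'}"
      proof clarify
        fix a c assume z: "a < q" "c < q - 1" "c < a"
        show "(a, c) \<in> (\<lambda>(t,t'). (Suc t', t)) ` {(t,t'). t < q \<and> t' < q-1 \<and> t \<le> t'}"
          by (rule image_eqI[of _ _ "(c, a - 1)"]) (use z in auto)
      qed
    qed
    moreover have "inj_on (\<lambda>(t,t'). (Suc t', t)) {(t,t'). t < q \<and> t' < q-1 \<and> t \<le> t'}"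
      by (auto simp: inj_on_def)
    ultimately show ?thesis by (simp add: sum.reindex split_def)
  qed
  also have "sum f {(t,t'). t < q \<and> t' < q-1 \<and> t \<le> t'} + \<dots> =
     sum (\<lambda>(t,t'). f (t,t') + f (Suc t', t)) {(t,t'). t < q \<and> t' < q-1 \<and> t \<le> t'}"
    by (simp add: sum.distrib split_def)
  also have "\<dots> \<in> rel0 \<nu> (q-2)"
  proof (rule rels_sum)
    fix z assume zA: "z \<in> {(t,t'). t < q \<and> t' < q-1 \<and> t \<le> t'}"
    then obtain t t' where zz: "z = (t,t')" and tt: "t < q" "t' < q - 1" "t \<le> t'" by auto
    have id: "M \<nu> (F (Suc t')) (F' t) = M \<nu> (M \<nu> (F t) (F' t')) E"
      unfolding F_def F'_def E_def by (rule I1) (use tt assms p_def in auto)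
    define y where "y = M \<nu> (M \<nu> g (F t)) (F' t')"
    have yc: "y \<in> C \<nu>" using tt Fc F'c assms unfolding y_def by auto
    have f2: "f (Suc t', t) = smul (- ((-1)^(t+t'))) (gen (M \<nu> y E, x))"
      unfolding f_def y_def using Fc F'c Ec tt assms id by (simp add: m_assoc power_add mult.commute)
    have f1: "f (t,t') = smul ((-1)^(t+t')) (gen (y, x))" unfolding f_def y_def by simp
    have sumeq: "f (t,t') + f (Suc t', t) = smul (-((-1)^(t+t'))) (gen (M \<nu> y E, x) - gen (y, x))"
      unfolding f1 f2 smul_diff smul_neg by simp
    have Ee: "E = pl \<nu> 0 (\<nu> - (q-2)) (pl (\<nu> - (q-2)) p 2 (b 1 1))"
      unfolding E_def using pl_nest[of p 2 "\<nu>-(q-2)" 0 \<nu> "b 1 1"] assms p_def by simp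
    have kc: "pl (\<nu> - (q-2)) p 2 (b 1 1) \<in> C (\<nu> - (q-2))" using assms p_def by (auto intro!: pl_closed)
    have "(gen (M \<nu> y E, x) - gen (y, x) :: 'g \<times> unit \<Rightarrow>\<^sub>0 'r) \<in> rel0 \<nu> (q-2)"
      unfolding Ee by (rule rel0_gen) (use yc assms kc in auto)
    then have "f (t,t') + f (Suc t', t) \<in> rel0 \<nu> (q-2)" unfolding sumeq by (rule rels_smul)
    then show "(case z of (t, t') \<Rightarrow> f (t, t') + f (Suc t', t)) \<in> rel0 \<nu> (q-2)"
      using zz by simp
  qed
  finally show ?thesis .
qed


lemma lin_ext_rels: "(\<And>a. a \<in> Poly_Mapping.keys u \<Longrightarrow> \<phi> a \<in> ctil_rels G s X K act \<nu> q) \<Longrightarrow> lin_ext \<phi> u \<in> ctil_rels G s X K act \<nu> q"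
  unfolding ctil_rels_def by (rule lin_ext_rspan)

lemma d_lin: "ctil_d G s b io \<nu> q u = lin_ext (\<lambda>a. ctil_d G s b io \<nu> q (gen a)) u"
  unfolding ctil_d_def by (rule lin_ext_cong) simp

lemma face_coset: assumes "t < j" "j \<le> \<nu>" "g \<in> C \<nu>" "k \<in> C (\<nu>-j)"
  shows "M \<nu> (M \<nu> g (pl \<nu> 0 (\<nu>-j) k)) (ctil_face G s b \<nu> j t) =
         M \<nu> (M \<nu> g (ctil_face G s b \<nu> j t)) (pl \<nu> 0 (\<nu>-(j-1)) (pl (\<nu>-(j-1)) 0 (\<nu>-j) k))"
    and "pl (\<nu>-(j-1)) 0 (\<nu>-j) k \<in> C (\<nu>-(j-1))"
proof -
  have n: "pl \<nu> 0 (\<nu>-(j-1)) (pl (\<nu>-(j-1)) 0 (\<nu>-j) k) = pl \<nu> 0 (\<nu>-j) k"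
    using pl_nest[of 0 "\<nu>-j" "\<nu>-(j-1)" 0 \<nu> k] assms by simp
  have c: "M \<nu> (pl \<nu> 0 (\<nu>-j) k) (pl \<nu> (\<nu>-j) (Suc t) (b 1 t)) = M \<nu> (pl \<nu> (\<nu>-j) (Suc t) (b 1 t)) (pl \<nu> 0 (\<nu>-j) k)"
    by (rule pl_comm) (use assms in auto)
  show "M \<nu> (M \<nu> g (pl \<nu> 0 (\<nu>-j) k)) (ctil_face G s b \<nu> j t) =
         M \<nu> (M \<nu> g (ctil_face G s b \<nu> j t)) (pl \<nu> 0 (\<nu>-(j-1)) (pl (\<nu>-(j-1)) 0 (\<nu>-j) k))"
    unfolding n face_pl[OF assms(1,2)] using assms c by (simp add: m_assoc)
  show "pl (\<nu>-(j-1)) 0 (\<nu>-j) k \<in> C (\<nu>-(j-1))" using assms by (auto intro!: pl_closed)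
qed

definition hprev :: "(nat \<Rightarrow> 'g \<times> unit \<Rightarrow> ('g \<times> unit \<Rightarrow>\<^sub>0 'r::comm_ring_1)) \<Rightarrow> nat \<Rightarrow> ('g \<times> unit \<Rightarrow>\<^sub>0 'r) \<Rightarrow> ('g \<times> unit \<Rightarrow>\<^sub>0 'r)" where
  "hprev \<phi> j u = (if j = 0 then 0 else lin_ext (\<phi> (j-1)) u)"

definition HP :: "nat \<Rightarrow> (nat \<Rightarrow> 'g \<times> unit \<Rightarrow> ('g \<times> unit \<Rightarrow>\<^sub>0 'r::comm_ring_1)) \<Rightarrow> nat \<Rightarrow> bool" where
  "HP \<nu> \<phi> j \<longleftrightarrow> (\<forall>g\<in>C \<nu>. \<phi> j (g,()) \<in> free_on (gens0 \<nu> (Suc j)))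
     \<and> (\<forall>g\<in>C \<nu>. \<forall>k\<in>C (\<nu>-j). \<phi> j (M \<nu> g (pl \<nu> 0 (\<nu>-j) k), ()) = \<phi> j (g,()))
     \<and> (\<forall>g\<in>C \<nu>. d0 \<nu> (Suc j) (\<phi> j (g,())) + hprev \<phi> j (d0 \<nu> j (gen (g,()))) - gen (g,()) \<in> rel0 \<nu> j)"

lemma hprev_lin: "hprev \<phi> j u = lin_ext (\<lambda>a. hprev \<phi> j (gen a)) u"
  unfolding hprev_def by (cases "j = 0") (auto simp: lin_ext_def[of "\<lambda>a. 0"] intro: lin_ext_cong)

lemma HP_free: "HP \<nu> \<phi> j \<Longrightarrow> u \<in> free_on (gens0 \<nu> j) \<Longrightarrow> lin_ext (\<phi> j) u \<in> free_on (gens0 \<nu> (Suc j))"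
  unfolding HP_def by (rule free_on_lin_ext) (auto dest: free_on_keys)

lemma HP_lin: assumes "HP \<nu> \<phi> j" "u \<in> free_on (gens0 \<nu> j)"
  shows "d0 \<nu> (Suc j) (lin_ext (\<phi> j) u) + hprev \<phi> j (d0 \<nu> j u) - u \<in> rel0 \<nu> j"
proof -
  have "d0 \<nu> (Suc j) (lin_ext (\<phi> j) u) + hprev \<phi> j (d0 \<nu> j u) - u =
    lin_ext (\<lambda>a. d0 \<nu> (Suc j) (\<phi> j a) + hprev \<phi> j (d0 \<nu> j (gen a)) - gen a) u"
  proof -
    have e1: "d0 \<nu> (Suc j) (lin_ext (\<phi> j) u) = lin_ext (\<lambda>a. d0 \<nu> (Suc j) (\<phi> j a)) u"
      unfolding ctil_d_def by (rule lin_ext_comp)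
    have e2: "hprev \<phi> j (d0 \<nu> j u) = lin_ext (\<lambda>a. hprev \<phi> j (d0 \<nu> j (gen a))) u"
      apply (subst d_lin)
      unfolding hprev_def by (cases "j=0") (simp_all add: lin_ext_def[of "\<lambda>a. 0"] lin_ext_comp)
    have e3: "lin_ext (\<lambda>a. d0 \<nu> (Suc j) (\<phi> j a) + hprev \<phi> j (d0 \<nu> j (gen a)) - gen a) u
       = lin_ext (\<lambda>a. d0 \<nu> (Suc j) (\<phi> j a) + hprev \<phi> j (d0 \<nu> j (gen a))) u - lin_ext gen u"
      by (simp only: lin_ext_linear_comb)
    show ?thesis unfolding e1 e2 e3 lin_ext_gen_id lin_ext_linear_comb(1) ..
  qed
  also have "\<dots> \<in> rel0 \<nu> j"
  proof (rule lin_ext_rels)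
    fix a assume "a \<in> Poly_Mapping.keys u"
    then obtain g where a: "a = (g, ())" "g \<in> C \<nu>" using assms(2) by (cases a) (auto dest: free_on_keys)
    then show "d0 \<nu> (Suc j) (\<phi> j a) + hprev \<phi> j (d0 \<nu> j (gen a)) - gen a \<in> rel0 \<nu> j"
      using assms(1) unfolding HP_def by auto
  qed
  finally show ?thesis .
qed

lemma HP_kill: assumes "HP \<nu> \<phi> j" "j \<le> \<nu>" "w \<in> rel0 \<nu> j"
  shows "lin_ext (\<phi> j) w = 0"
  using assms(3) unfolding ctil_rels_def
proof (rule lin_ext_rspan_zero[rotated])
  fix y :: "'g \<times> unit \<Rightarrow>\<^sub>0 'a"
  assume "y \<in> {gen (M \<nu> g (s (\<nu>-j) j t (I j)), x) - gen (g, (\<lambda>j t x. x) (\<nu>-j) t x) | g t x.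
         j \<le> \<nu> \<and> g \<in> C \<nu> \<and> t \<in> C (\<nu>-j) \<and> x \<in> (\<lambda>j. UNIV) (\<nu>-j)} \<union>
       {lin_ext (\<lambda>x. gen (g, x)) k | g k. j \<le> \<nu> \<and> g \<in> C \<nu> \<and> k \<in> (\<lambda>j. {}) (\<nu> - j)}"
  then obtain g t where y: "y = gen (M \<nu> g (s (\<nu>-j) j t (I j)), ()) - gen (g, ())" "g \<in> C \<nu>" "t \<in> C (\<nu>-j)"
    by auto
  show "lin_ext (\<phi> j) y = 0"
    using assms(1,2) y lift_pl[OF y(3) assms(2)] unfolding HP_def by (simp add: lin_ext_diff)
qed


lemma d0_free: assumes "g \<in> C \<nu>" "j \<le> \<nu>"
  shows "(d0 \<nu> j (gen (g, x)) :: 'g \<times> unit \<Rightarrow>\<^sub>0 'r::comm_ring_1) \<in> free_on (gens0 \<nu> (j-1))"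
  unfolding d_gen by (rule free_on_sum, rule free_on_smul, rule free_on_gen) (use assms in auto)

lemma hprev_upd: "hprev (\<phi>(j:=\<psi>)) j = hprev \<phi> j"
  unfolding hprev_def by (rule ext) auto

lemma HP_step:
  fixes \<phi> :: "nat \<Rightarrow> 'g \<times> unit \<Rightarrow> ('g \<times> unit \<Rightarrow>\<^sub>0 'r::comm_ring_1)"
  assumes jn: "j \<le> \<nu>" and prev: "\<forall>i<j. HP \<nu> \<phi> i"
    and H3j: "ctil_H_vanishes G s b (\<lambda>j. UNIV :: unit set) (\<lambda>j. {} :: (unit \<Rightarrow>\<^sub>0 'r) set) (\<lambda>j t x. x) (\<lambda>j x. x) (int j - 1) \<nu>"
  shows "\<exists>\<psi>. HP \<nu> (\<phi>(j:=\<psi>)) j"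
proof -
  have H3': "\<forall>x\<in>free_on (gens0 \<nu> j). (j = 0 \<or> d0 \<nu> j x \<in> (rel0 \<nu> (j-1) :: ('g \<times> unit \<Rightarrow>\<^sub>0 'r) set)) \<longrightarrow>
      (\<exists>y\<in>free_on (gens0 \<nu> (Suc j)). x - d0 \<nu> (Suc j) y \<in> rel0 \<nu> j)"
    using H3j unfolding ctil_H_vanishes_def by simp
  define z :: "'g \<Rightarrow> ('g \<times> unit \<Rightarrow>\<^sub>0 'r)" where "z r = gen (r,()) - hprev \<phi> j (d0 \<nu> j (gen (r,())))" for r
  have zfree: "z r \<in> free_on (gens0 \<nu> j)" if r: "r \<in> C \<nu>" for r
  proof -
    have "hprev \<phi> j (d0 \<nu> j (gen (r,()))) \<in> free_on (gens0 \<nu> j)"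
    proof (cases "j = 0")
      case False
      then have "HP \<nu> \<phi> (j-1)" using prev by simp
      from HP_free[OF this d0_free[OF r jn]] show ?thesis using False unfolding hprev_def by simp
    qed (simp add: hprev_def)
    then show ?thesis unfolding z_def by (intro free_on_diff free_on_gen) (use r jn in auto)
  qed
  have zcyc: "d0 \<nu> j (z r) \<in> rel0 \<nu> (j-1)" if r: "r \<in> C \<nu>" and j0: "j \<noteq> 0" for r
  proof -
    define u where "u = d0 \<nu> j (gen (r,()) :: 'g \<times> unit \<Rightarrow>\<^sub>0 'r)"
    have HPj1: "HP \<nu> \<phi> (j-1)" using prev j0 by simp
    have uf: "u \<in> free_on (gens0 \<nu> (j-1))" unfolding u_def by (rule d0_free[OF r jn])
    have L: "d0 \<nu> j (lin_ext (\<phi> (j-1)) u) + hprev \<phi> (j-1) (d0 \<nu> (j-1) u) - u \<in> rel0 \<nu> (j-1)"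
      using HP_lin[OF HPj1 uf] j0 by simp
    have Z: "hprev \<phi> (j-1) (d0 \<nu> (j-1) u) = 0"
    proof (cases "j - 1 = 0")
      case False
      then have HPj2: "HP \<nu> \<phi> (j-2)" using prev by simp
      have dd: "d0 \<nu> (j-1) u \<in> rel0 \<nu> (j-2)" unfolding u_def by (rule d0_sq) (use False jn r in auto)
      have j2: "j - 2 \<le> \<nu>" using jn by arith
      have e: "j - 1 - 1 = j - 2" by arith
      have "lin_ext (\<phi> (j-2)) (d0 \<nu> (j-1) u) = 0" by (rule HP_kill[OF HPj2 j2 dd])
      then show ?thesis using False unfolding hprev_def e by simp
    qed (simp add: hprev_def)
    have "d0 \<nu> j (z r) = u - d0 \<nu> j (lin_ext (\<phi> (j-1)) u)"
      unfolding z_def u_def[symmetric] d_diff using j0 by (simp add: hprev_def)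
    also have "\<dots> = - (d0 \<nu> j (lin_ext (\<phi> (j-1)) u) + hprev \<phi> (j-1) (d0 \<nu> (j-1) u) - u)"
      using Z by simp
    finally show ?thesis by (simp only:) (rule rels_uminus[OF L])
  qed
  have "\<forall>r\<in>C \<nu>. \<exists>y. y \<in> free_on (gens0 \<nu> (Suc j)) \<and> z r - d0 \<nu> (Suc j) y \<in> rel0 \<nu> j"
  proof
    fix r assume r: "r \<in> C \<nu>"
    have "j = 0 \<or> d0 \<nu> j (z r) \<in> rel0 \<nu> (j-1)" using zcyc[OF r] by blast
    then show "\<exists>y. y \<in> free_on (gens0 \<nu> (Suc j)) \<and> z r - d0 \<nu> (Suc j) y \<in> rel0 \<nu> j"
      using H3' zfree[OF r] by blast
  qed
  then obtain Y where Y: "\<And>r. r \<in> C \<nu> \<Longrightarrow> Y r \<in> free_on (gens0 \<nu> (Suc j)) \<and> z r - d0 \<nu> (Suc j) (Y r) \<in> rel0 \<nu> j"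
    by metis
  define P where "P g r \<longleftrightarrow> r \<in> C \<nu> \<and> (\<exists>k\<in>C (\<nu>-j). r = M \<nu> g (pl \<nu> 0 (\<nu>-j) k))" for g r
  define rep where "rep g = (SOME r. P g r)" for g
  have rep1: "P g (rep g)" if g: "g \<in> C \<nu>" for g
    unfolding rep_def
  proof (rule someI)
    show "P g g" unfolding P_def using g jn by (auto intro!: bexI[of _ "I (\<nu>-j)"])
  qed
  have rep2: "rep (M \<nu> g (pl \<nu> 0 (\<nu>-j) k)) = rep g" if g: "g \<in> C \<nu>" and k: "k \<in> C (\<nu>-j)" for g k
  proof -
    have "P (M \<nu> g (pl \<nu> 0 (\<nu>-j) k)) = P g"
    proof (intro ext iffI)
      fix r assume "P (M \<nu> g (pl \<nu> 0 (\<nu>-j) k)) r"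
      then obtain k' where r: "r \<in> C \<nu>" "k' \<in> C (\<nu>-j)" "r = M \<nu> (M \<nu> g (pl \<nu> 0 (\<nu>-j) k)) (pl \<nu> 0 (\<nu>-j) k')"
        unfolding P_def by blast
      then have "r = M \<nu> g (pl \<nu> 0 (\<nu>-j) (M (\<nu>-j) k k'))" using g k jn by (simp add: m_assoc pl_mult)
      then show "P g r" unfolding P_def using r k by blast
    next
      fix r assume "P g r"
      then obtain k' where r: "r \<in> C \<nu>" "k' \<in> C (\<nu>-j)" "r = M \<nu> g (pl \<nu> 0 (\<nu>-j) k')"
        unfolding P_def by blast
      have "M \<nu> (M \<nu> g (pl \<nu> 0 (\<nu>-j) k)) (pl \<nu> 0 (\<nu>-j) (M (\<nu>-j) (Inv (\<nu>-j) k) k')) =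
            M \<nu> g (pl \<nu> 0 (\<nu>-j) (M (\<nu>-j) k (M (\<nu>-j) (Inv (\<nu>-j) k) k')))"
        using g k r jn by (simp add: m_assoc pl_mult)
      also have "M (\<nu>-j) k (M (\<nu>-j) (Inv (\<nu>-j) k) k') = k'" using k r by (simp add: m_assoc[symmetric])
      finally show "P (M \<nu> g (pl \<nu> 0 (\<nu>-j) k)) r" unfolding P_def using r k
        by (intro conjI bexI[of _ "M (\<nu>-j) (Inv (\<nu>-j) k) k'"]) auto
    qed
    then show ?thesis unfolding rep_def by simp
  qed
  define \<psi> :: "'g \<times> unit \<Rightarrow> ('g \<times> unit \<Rightarrow>\<^sub>0 'r)" where "\<psi> = (\<lambda>(g, x). Y (rep g))"
  have hp_rep: "hprev \<phi> j (d0 \<nu> j (gen (g,()))) = hprev \<phi> j (d0 \<nu> j (gen (rep g,())))" if g: "g \<in> C \<nu>" for g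
  proof (cases "j = 0")
    case False
    from rep1[OF g] obtain k where k: "k \<in> C (\<nu>-j)" "rep g = M \<nu> g (pl \<nu> 0 (\<nu>-j) k)" unfolding P_def by blast
    have HPj1: "HP \<nu> \<phi> (j-1)" using prev False by simp
    have "\<phi> (j-1) (M \<nu> (rep g) (ctil_face G s b \<nu> j t), ()) = \<phi> (j-1) (M \<nu> g (ctil_face G s b \<nu> j t), ())"
      if t: "t < j" for t
      using HPj1 face_coset[OF t jn g k(1)] k g jn t unfolding HP_def by auto
    then show ?thesis using False unfolding hprev_def d_gen
      by (simp add: lin_ext_sum lin_ext_smul)
  qed (simp add: hprev_def)
  have "HP \<nu> (\<phi>(j:=\<psi>)) j"
    unfolding HP_def hprev_upd
  proof (intro conjI ballI)
    fix g assume g: "g \<in> C \<nu>"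
    show "(\<phi>(j := \<psi>)) j (g, ()) \<in> free_on (gens0 \<nu> (Suc j))"
      using Y rep1[OF g] unfolding \<psi>_def P_def by simp
    fix k assume k: "k \<in> C (\<nu>-j)"
    show "(\<phi>(j := \<psi>)) j (M \<nu> g (pl \<nu> 0 (\<nu>-j) k), ()) = (\<phi>(j := \<psi>)) j (g, ())"
      using rep2[OF g k] unfolding \<psi>_def by simp
  next
    fix g assume g: "g \<in> C \<nu>"
    define r where "r = rep g"
    from rep1[OF g] obtain k where r: "r \<in> C \<nu>" "k \<in> C (\<nu>-j)" "r = M \<nu> g (pl \<nu> 0 (\<nu>-j) k)"
      unfolding P_def r_def by blast
    have e: "d0 \<nu> (Suc j) ((\<phi>(j := \<psi>)) j (g, ())) + hprev \<phi> j (d0 \<nu> j (gen (g, ()))) - gen (g, ())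
        = (gen (r,()) - gen (g,())) - (z r - d0 \<nu> (Suc j) (Y r))"
      unfolding hp_rep[OF g] z_def \<psi>_def by (simp add: r_def)
    have r1: "gen (r,()) - gen (g,()) \<in> rel0 \<nu> j"
      unfolding r(3) by (rule rel0_gen) (use jn g r in auto)
    show "d0 \<nu> (Suc j) ((\<phi>(j := \<psi>)) j (g, ())) + hprev \<phi> j (d0 \<nu> j (gen (g, ()))) - gen (g, ()) \<in> rel0 \<nu> j"
      unfolding e by (rule rels_diff[OF r1]) (use Y r in blast)
  qed
  then show ?thesis by blast
qed

lemma HP_exists:
  fixes \<nu> L :: nat
  assumes "L \<le> \<nu>"
    and H3: "\<forall>j\<le>L. ctil_H_vanishes G s b (\<lambda>j. UNIV :: unit set) (\<lambda>j. {} :: (unit \<Rightarrow>\<^sub>0 'r::comm_ring_1) set) (\<lambda>j t x. x) (\<lambda>j x. x) (int j - 1) \<nu>"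
  shows "\<exists>\<phi> :: nat \<Rightarrow> 'g \<times> unit \<Rightarrow> ('g \<times> unit \<Rightarrow>\<^sub>0 'r). \<forall>j\<le>L. HP \<nu> \<phi> j"
  using assms
proof (induction L)
  case 0
  obtain \<psi> where "HP \<nu> ((\<lambda>_ _. 0 :: 'g \<times> unit \<Rightarrow>\<^sub>0 'r)(0:=\<psi>)) 0"
    using HP_step[of 0 \<nu> "\<lambda>_ _. 0"] 0 by auto
  then show ?case by auto
next
  case (Suc L)
  then obtain \<phi> :: "nat \<Rightarrow> 'g \<times> unit \<Rightarrow> ('g \<times> unit \<Rightarrow>\<^sub>0 'r)" where \<phi>: "\<forall>j\<le>L. HP \<nu> \<phi> j" by auto
  have h: "ctil_H_vanishes G s b (\<lambda>j. UNIV :: unit set) (\<lambda>j. {} :: (unit \<Rightarrow>\<^sub>0 'r) set) (\<lambda>j t x. x) (\<lambda>j x. x) (int (Suc L) - 1) \<nu>"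
    using Suc.prems(2) by blast
  have "\<forall>i<Suc L. HP \<nu> \<phi> i" using \<phi> by auto
  from HP_step[OF Suc.prems(1) this h] obtain \<psi> where \<psi>: "HP \<nu> (\<phi>(Suc L:=\<psi>)) (Suc L)" by blast
  have "HP \<nu> (\<phi>(Suc L:=\<psi>)) j" if "j \<le> L" for j
  proof -
    have "(\<phi>(Suc L:=\<psi>)) j = \<phi> j" "hprev (\<phi>(Suc L:=\<psi>)) j = hprev \<phi> j"
      using that unfolding hprev_def by (auto intro!: ext)
    then show ?thesis using \<phi> that unfolding HP_def by simp
  qed
  then show ?case using \<psi> by (metis le_Suc_eq)
qed

end


locale cv = bsg G s b for G :: "nat \<Rightarrow> 'g monoid" and s b +
  fixes n m :: nat and sm :: "'r::comm_ring_1 \<Rightarrow> 'w::ab_group_add \<Rightarrow> 'w" and actW :: "'g \<Rightarrow> 'w \<Rightarrow> 'w"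
begin

abbreviation dV :: "nat \<Rightarrow> ('g \<times> ('g \<times> 'w) \<Rightarrow>\<^sub>0 'r) \<Rightarrow> ('g \<times> ('g \<times> 'w) \<Rightarrow>\<^sub>0 'r)"
  where "dV q \<equiv> ctil_d G s b (homW_iota G s b) n q"
abbreviation relV :: "nat \<Rightarrow> ('g \<times> ('g \<times> 'w) \<Rightarrow>\<^sub>0 'r) set"
  where "relV q \<equiv> ctil_rels G s (homW_gens G m) (homW_rels G s sm actW m) (homW_act G) n q"
abbreviation gensV :: "nat \<Rightarrow> ('g \<times> ('g \<times> 'w)) set"
  where "gensV q \<equiv> ctil_gens G (homW_gens G m) n q"

lemma gensV_iff[simp]: "(g, (f, w)) \<in> gensV q \<longleftrightarrow> q \<le> n \<and> g \<in> C n \<and> m \<le> n - q \<and> f \<in> C (n-q)"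
  by (auto simp: ctil_gens_def homW_gens_def)

lemma RV_bal: assumes "q \<le> n" "m \<le> n - q" "\<beta> \<in> C n" "f \<in> C (n-q)"
  shows "gen (M n \<beta> (pl n 0 (n-q) f), (I (n-q), w)) - gen (\<beta>, (f, w)) \<in> relV q"
  unfolding ctil_rels_def
proof (rule rspan_gen, rule UnI1, rule CollectI, intro exI conjI)
  show "gen (M n \<beta> (pl n 0 (n-q) f), (I (n-q), w)) - gen (\<beta>, (f, w)) =
    gen (M n \<beta> (s (n-q) q f (I q)), (I (n-q), w)) - gen (\<beta>, homW_act G (n-q) f (I (n-q), w))"
    using lift_pl[OF assms(4,1)] assms by (simp add: homW_act_def)
qed (use assms in \<open>auto simp: homW_gens_def\<close>)

lemma RV_bal': assumes "q \<le> n" "m \<le> n - q" "\<beta> \<in> C n" "f \<in> C (n-q)"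
  shows "gen (\<beta>, (f, w)) - gen (M n \<beta> (pl n 0 (n-q) f), (I (n-q), w)) \<in> relV q"
  using rels_uminus[OF RV_bal[OF assms, of w]] by simp

lemma RV_K: assumes "q \<le> n" "\<beta> \<in> C n" "k \<in> homW_rels G s sm actW m (n-q)"
  shows "lin_ext (\<lambda>x. gen (\<beta>, x)) k \<in> relV q"
  unfolding ctil_rels_def by (rule rspan_gen, rule UnI2) (use assms in auto)

lemma RV_K1: assumes "q \<le> n" "m \<le> n - q" "\<beta> \<in> C n" "f \<in> C (n-q)"
  shows "gen (\<beta>, (f, w + w')) - gen (\<beta>, (f, w)) - gen (\<beta>, (f, w')) \<in> relV q"
proof -
  have "gen (f, w + w') - gen (f, w) - gen (f, w') \<in> homW_rels G s sm actW m (n-q)"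
    unfolding homW_rels_def if_P[OF assms(2)] using assms(4) by blast
  from RV_K[OF assms(1,3) this] show ?thesis by (simp add: lin_ext_diff)
qed

lemma RV_K2: assumes "q \<le> n" "m \<le> n - q" "\<beta> \<in> C n" "f \<in> C (n-q)"
  shows "gen (\<beta>, (f, sm c w)) - smul c (gen (\<beta>, (f, w))) \<in> relV q"
proof -
  have "gen (f, sm c w) - smul c (gen (f, w)) \<in> homW_rels G s sm actW m (n-q)"
    unfolding homW_rels_def if_P[OF assms(2)] using assms(4) by blast
  from RV_K[OF assms(1,3) this] show ?thesis by (simp add: lin_ext_diff lin_ext_smul)
qed


lemma RV_coset: assumes "q + m \<le> n" "\<beta> \<in> C n" "\<kappa> \<in> C (n-q-m)"
  shows "gen (M n \<beta> (pl n 0 (n-q-m) \<kappa>), (I (n-q), w)) - gen (\<beta>, (I (n-q), w)) \<in> relV q"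
proof -
  define f' where "f' = s (n-q-m) m \<kappa> (I m)"
  have e: "n - q - m + m = n - q" using assms by simp
  have f'1: "f' = pl (n-q) 0 (n-q-m) \<kappa>" unfolding f'_def using pl_left[OF assms(3), of m] e by simp
  have f'c: "f' \<in> C (n-q)" unfolding f'1 using assms by (auto intro!: pl_closed)
  have f'2: "pl n 0 (n-q) f' = pl n 0 (n-q-m) \<kappa>"
    unfolding f'1 using pl_nest[of 0 "n-q-m" "n-q" 0 n \<kappa>] assms by simp
  have r1: "gen (M n \<beta> (pl n 0 (n-q) f'), (I (n-q), w)) - gen (\<beta>, (f', w)) \<in> relV q"
    by (rule RV_bal) (use assms f'c in auto)
  have "gen (M (n-q) (I (n-q)) (s (n-q-m) m \<kappa> (I m)), w) - gen (I (n-q), w) \<in> homW_rels G s sm actW m (n-q)"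
    unfolding homW_rels_def using assms by auto
  from RV_K[OF _ assms(2) this] have r2: "gen (\<beta>, (f', w)) - gen (\<beta>, (I (n-q), w)) \<in> relV q"
    using assms f'c unfolding f'_def[symmetric] by (simp add: lin_ext_diff)
  show ?thesis using rels_add[OF r1 r2] unfolding f'2 by simp
qed

lemma RV_Gm: assumes "q + m \<le> n" "\<beta> \<in> C n" "h \<in> C m"
  shows "gen (M n \<beta> (pl n (n-q-m) m h), (I (n-q), w)) - gen (\<beta>, (I (n-q), actW h w)) \<in> relV q"
proof -
  define f' where "f' = s (n-q-m) m (I (n-q-m)) h"
  have e: "n - q - m + m = n - q" using assms by simp
  have f'1: "f' = pl (n-q) (n-q-m) m h" unfolding f'_def using pl_right[OF assms(3), of "n-q-m"] e by simp
  have f'c: "f' \<in> C (n-q)" unfolding f'1 using assms by (auto intro!: pl_closed)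
  have f'2: "pl n 0 (n-q) f' = pl n (n-q-m) m h"
    unfolding f'1 using pl_nest[of "n-q-m" m "n-q" 0 n h] assms by simp
  have r1: "gen (M n \<beta> (pl n 0 (n-q) f'), (I (n-q), w)) - gen (\<beta>, (f', w)) \<in> relV q"
    by (rule RV_bal) (use assms f'c in auto)
  have m: "m \<le> n - q" using assms by arith
  have "gen (M (n-q) (I (n-q)) (s (n-q-m) m (I (n-q-m)) h), w) - gen (I (n-q), actW h w) \<in> homW_rels G s sm actW m (n-q)"
    unfolding homW_rels_def if_P[OF m] by (rule UnI2) (use assms in blast)
  from RV_K[OF _ assms(2) this] have r2: "gen (\<beta>, (f', w)) - gen (\<beta>, (I (n-q), actW h w)) \<in> relV q"
    using assms f'c unfolding f'_def[symmetric] by (simp add: lin_ext_diff)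
  show ?thesis using rels_add[OF r1 r2] unfolding f'2 by simp
qed


definition sv :: "'g \<Rightarrow> 'g \<Rightarrow> 'g" where "sv v h = M n (pl n 0 (n-m) v) (pl n (n-m) m h)"
definition Q :: "nat \<Rightarrow> 'g" where "Q q = pl n (n-q-m) (m+q) (b m q)"

lemma pl_full: "x \<in> C N \<Longrightarrow> pl N 0 N x = x" using pl_base by simp

lemma sv_s: assumes "m \<le> n" "v \<in> C (n-m)" "h \<in> C m" shows "sv v h = s (n-m) m v h"
proof -
  have "pl n 0 (n-m+m) (s (n-m) m v h) = M n (pl n 0 (n-m) v) (pl n (0 + (n-m)) m h)"
    by (rule pl_s(1)) (use assms in auto)
  moreover have "s (n-m) m v h \<in> C n" using s_closed[OF assms(2,3)] assms by simp
  ultimately show ?thesis unfolding sv_def using assms pl_full by simp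
qed

lemma sv_closed[simp,intro]: "m \<le> n \<Longrightarrow> v \<in> C (n-m) \<Longrightarrow> h \<in> C m \<Longrightarrow> sv v h \<in> C n"
  unfolding sv_def by (auto intro!: pl_closed)

lemma sv_mult: assumes "m \<le> n" "v \<in> C (n-m)" "h \<in> C m" "v' \<in> C (n-m)" "h' \<in> C m"
  shows "M n (sv v h) (sv v' h') = sv (M (n-m) v v') (M m h h')"
  using s_mult[of v "n-m" v' h m h'] assms by (simp add: sv_s)

lemma sv_one[simp]: "m \<le> n \<Longrightarrow> sv (I (n-m)) (I m) = I n"
  by (simp add: sv_s)

lemma sv_inv: assumes "m \<le> n" "v \<in> C (n-m)" "h \<in> C m"
  shows "Inv n (sv v h) = sv (Inv (n-m) v) (Inv m h)"
  using s_inv[of v "n-m" h m] assms by (simp add: sv_s)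

lemma sv_inj: assumes "m \<le> n" "v \<in> C (n-m)" "h \<in> C m" "v' \<in> C (n-m)" "h' \<in> C m" "sv v h = sv v' h'"
  shows "v = v' \<and> h = h'"
  using s_inj[of v "n-m" v' h m h'] assms by (simp add: sv_s)

lemma Q_closed[simp,intro]: "m + q \<le> n \<Longrightarrow> Q q \<in> C n"
  unfolding Q_def by (rule pl_closed) auto

lemma Q_coset: assumes "m + q \<le> n" "\<kappa> \<in> C (n-q-m)"
  shows "M n (pl n 0 (n-q-m) \<kappa>) (Q q) = M n (Q q) (pl n 0 (n-q-m) \<kappa>)"
  unfolding Q_def by (rule pl_comm) (use assms in auto)

lemma Q_nat: assumes "m + q \<le> n" "h \<in> C m"
  shows "M n (Q q) (pl n (n-q-m) m h) = M n (pl n (n-m) m h) (Q q)"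
proof -
  have "M n (pl n (n-q-m) (m+q) (b m q)) (M n (pl n (n-q-m) m h) (pl n (n-q-m+m) q (I q))) =
        M n (M n (pl n (n-q-m) q (I q)) (pl n (n-q-m+q) m h)) (pl n (n-q-m) (m+q) (b m q))"
    by (rule pl_nat) (use assms in auto)
  moreover have "n - q - m + q = n - m" using assms by simp
  ultimately show ?thesis unfolding Q_def using assms by simp
qed

definition repV :: "'g \<Rightarrow> 'g" where
  "repV \<gamma> = (SOME \<alpha>. \<alpha> \<in> C n \<and> (\<exists>v\<in>C (n-m). \<exists>h\<in>C m. \<gamma> = M n \<alpha> (sv v h)))"
definition decV :: "'g \<Rightarrow> 'g \<times> 'g" where
  "decV \<gamma> = (SOME vh. fst vh \<in> C (n-m) \<and> snd vh \<in> C m \<and> \<gamma> = M n (repV \<gamma>) (sv (fst vh) (snd vh)))"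

lemma rep_ok: assumes "m \<le> n" "\<gamma> \<in> C n"
  shows "repV \<gamma> \<in> C n \<and> (\<exists>v\<in>C (n-m). \<exists>h\<in>C m. \<gamma> = M n (repV \<gamma>) (sv v h))"
  unfolding repV_def
proof (rule someI)
  show "\<gamma> \<in> C n \<and> (\<exists>v\<in>C (n-m). \<exists>h\<in>C m. \<gamma> = M n \<gamma> (sv v h))"
    using assms by (intro conjI bexI[of _ "I (n-m)"] bexI[of _ "I m"]) auto
qed

lemma dec_ok: assumes "m \<le> n" "\<gamma> \<in> C n"
  shows "fst (decV \<gamma>) \<in> C (n-m) \<and> snd (decV \<gamma>) \<in> C m \<and> \<gamma> = M n (repV \<gamma>) (sv (fst (decV \<gamma>)) (snd (decV \<gamma>)))"
  unfolding decV_def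
proof (rule someI_ex)
  from rep_ok[OF assms] obtain v h where "v \<in> C (n-m)" "h \<in> C m" "\<gamma> = M n (repV \<gamma>) (sv v h)" by blast
  then show "\<exists>vh. fst vh \<in> C (n-m) \<and> snd vh \<in> C m \<and> \<gamma> = M n (repV \<gamma>) (sv (fst vh) (snd vh))"
    by (intro exI[of _ "(v,h)"]) simp
qed

lemma dec_uniq: assumes "m \<le> n" "\<gamma> \<in> C n" "v \<in> C (n-m)" "h \<in> C m" "\<gamma> = M n (repV \<gamma>) (sv v h)"
  shows "decV \<gamma> = (v, h)"
proof -
  have d: "fst (decV \<gamma>) \<in> C (n-m)" "snd (decV \<gamma>) \<in> C m" "\<gamma> = M n (repV \<gamma>) (sv (fst (decV \<gamma>)) (snd (decV \<gamma>)))"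
    using dec_ok[OF assms(1,2)] by auto
  have r: "repV \<gamma> \<in> C n" using rep_ok[OF assms(1,2)] by auto
  have "sv (fst (decV \<gamma>)) (snd (decV \<gamma>)) = sv v h"
  proof -
    have "M n (repV \<gamma>) (sv (fst (decV \<gamma>)) (snd (decV \<gamma>))) = M n (repV \<gamma>) (sv v h)"
      using d(3) assms(5) by simp
    then show ?thesis using l_cancel[of "repV \<gamma>" n "sv (fst (decV \<gamma>)) (snd (decV \<gamma>))" "sv v h"]
      r d(1,2) assms(1,3,4) by simp
  qed
  then show ?thesis using sv_inj[OF assms(1) d(1,2) assms(3,4)] by (simp add: prod_eq_iff)
qed

lemma rep_inv: assumes "m \<le> n" "\<gamma> \<in> C n" "v \<in> C (n-m)" "h \<in> C m"
  shows "repV (M n \<gamma> (sv v h)) = repV \<gamma>"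
proof -
  have "(\<lambda>\<alpha>. \<alpha> \<in> C n \<and> (\<exists>v'\<in>C (n-m). \<exists>h'\<in>C m. M n \<gamma> (sv v h) = M n \<alpha> (sv v' h'))) =
        (\<lambda>\<alpha>. \<alpha> \<in> C n \<and> (\<exists>v'\<in>C (n-m). \<exists>h'\<in>C m. \<gamma> = M n \<alpha> (sv v' h')))"
  proof (intro ext iffI conjI)
    fix \<alpha> assume "\<alpha> \<in> C n \<and> (\<exists>v'\<in>C (n-m). \<exists>h'\<in>C m. M n \<gamma> (sv v h) = M n \<alpha> (sv v' h'))"
    then obtain v' h' where a: "\<alpha> \<in> C n" "v' \<in> C (n-m)" "h' \<in> C m" "M n \<gamma> (sv v h) = M n \<alpha> (sv v' h')" by blast
    have "\<gamma> = M n (M n \<gamma> (sv v h)) (Inv n (sv v h))" using assms by simp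
    also have "\<dots> = M n \<alpha> (sv (M (n-m) v' (Inv (n-m) v)) (M m h' (Inv m h)))"
      unfolding a(4) using a assms by (simp add: m_assoc sv_inv sv_mult)
    finally show "\<alpha> \<in> C n" "\<exists>v'\<in>C (n-m). \<exists>h'\<in>C m. \<gamma> = M n \<alpha> (sv v' h')" using a assms by auto
  next
    fix \<alpha> assume "\<alpha> \<in> C n \<and> (\<exists>v'\<in>C (n-m). \<exists>h'\<in>C m. \<gamma> = M n \<alpha> (sv v' h'))"
    then obtain v' h' where a: "\<alpha> \<in> C n" "v' \<in> C (n-m)" "h' \<in> C m" "\<gamma> = M n \<alpha> (sv v' h')" by blast
    have "M n \<gamma> (sv v h) = M n \<alpha> (sv (M (n-m) v' v) (M m h' h))"
      unfolding a(4) using a assms by (simp add: m_assoc sv_mult)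
    then show "\<alpha> \<in> C n" "\<exists>v'\<in>C (n-m). \<exists>h'\<in>C m. M n \<gamma> (sv v h) = M n \<alpha> (sv v' h')" using a assms by auto
  qed
  then show ?thesis unfolding repV_def by simp
qed


definition Ind :: "nat \<Rightarrow> 'g \<Rightarrow> 'g \<Rightarrow> 'w \<Rightarrow> ('g \<times> unit \<Rightarrow>\<^sub>0 'r) \<Rightarrow> ('g \<times> ('g \<times> 'w) \<Rightarrow>\<^sub>0 'r)" where
  "Ind q \<alpha> h w = lin_ext (\<lambda>(v, _). gen (M n (M n \<alpha> (sv v h)) (Q q), (I (n-q), w)))"

lemma lin_ext_rels_map:
  assumes "\<And>y. y \<in> T \<Longrightarrow> lin_ext \<phi> y \<in> ctil_rels G s X K act \<nu> q" "x \<in> rspan T"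
  shows "lin_ext \<phi> x \<in> ctil_rels G s X K act \<nu> q"
  using assms unfolding ctil_rels_def by (rule lin_ext_rspan_map)

lemma Ind_gen: "Ind q \<alpha> h w (gen (v, u)) = gen (M n (M n \<alpha> (sv v h)) (Q q), (I (n-q), w))"
  unfolding Ind_def by simp

lemma K4: assumes "m + q \<le> n" "\<alpha> \<in> C n" "h \<in> C m" "y \<in> rel0 (n-m) q"
  shows "Ind q \<alpha> h w y \<in> relV q"
  using assms(4) unfolding ctil_rels_def[of _ _ "\<lambda>j. UNIV :: unit set"] Ind_def
proof (rule lin_ext_rels_map[rotated])
  fix y :: "'g \<times> unit \<Rightarrow>\<^sub>0 'r"
  assume "y \<in> {gen (M (n-m) g (s (n-m-q) q t (I q)), x) - gen (g, (\<lambda>j t x. x) (n-m-q) t x) | g t x.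
         q \<le> n-m \<and> g \<in> C (n-m) \<and> t \<in> C (n-m-q) \<and> x \<in> (\<lambda>j. UNIV) (n-m-q)} \<union>
       {lin_ext (\<lambda>x. gen (g, x)) k | g k. q \<le> n-m \<and> g \<in> C (n-m) \<and> k \<in> (\<lambda>j. {}) (n-m-q)}"
  then obtain v t where y: "y = gen (M (n-m) v (s (n-m-q) q t (I q)), ()) - gen (v, ())" "v \<in> C (n-m)" "t \<in> C (n-m-q)"
    by auto
  have e: "n - m - q = n - q - m" by simp
  have tp: "s (n-m-q) q t (I q) = pl (n-m) 0 (n-m-q) t" using lift_pl[of t "n-m" q] y assms by simp
  have tc: "pl (n-m) 0 (n-m-q) t \<in> C (n-m)" using y assms by (auto intro!: pl_closed)
  have sv1: "sv (M (n-m) v (pl (n-m) 0 (n-m-q) t)) h = M n (sv v h) (pl n 0 (n-q-m) t)"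
  proof -
    have "sv (M (n-m) v (pl (n-m) 0 (n-m-q) t)) h = M n (sv v h) (sv (pl (n-m) 0 (n-m-q) t) (I m))"
      using sv_mult[of v h "pl (n-m) 0 (n-m-q) t" "I m"] assms y tc by simp
    also have "sv (pl (n-m) 0 (n-m-q) t) (I m) = pl n 0 (n-q-m) t"
      unfolding sv_def using pl_nest[of 0 "n-m-q" "n-m" 0 n t] assms y e by simp
    finally show ?thesis .
  qed
  have tc': "t \<in> C (n-q-m)" using y e by simp
  have "lin_ext (\<lambda>(v, _). gen (M n (M n \<alpha> (sv v h)) (Q q), (I (n-q), w))) y =
      gen (M n (M n (M n \<alpha> (sv v h)) (Q q)) (pl n 0 (n-q-m) t), (I (n-q), w)) - gen (M n (M n \<alpha> (sv v h)) (Q q), (I (n-q), w))"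
    unfolding y(1) tp lin_ext_diff using sv1 assms y tc' Q_coset[of q t]
    by (simp add: m_assoc)
  also have "\<dots> \<in> relV q" by (rule RV_coset) (use assms y tc' in auto)
  finally show "lin_ext (\<lambda>(v, _). gen (M n (M n \<alpha> (sv v h)) (Q q), (I (n-q), w))) y \<in> relV q" .
qed


lemma I2V: assumes "m + L \<le> n" "t < L"
  shows "M n (M n (Q L) (pl n (n-L) (Suc t) (b 1 t))) (pl n 0 (Suc (n-L)) (Inv (Suc (n-L)) (b (n-L) 1)))
   = M n (M n (pl n (n-L-m) (Suc t) (b 1 t)) (Q (L-1))) (pl n 0 (Suc (n-L-m)) (Inv (Suc (n-L-m)) (b (n-L-m) 1)))"
proof -
  define l where "l = n - L - m"
  have e: "n = l + m + L" "l + m = n - L" "n - (L-1) - m = Suc l" "n - L - m = l" using assms l_def by auto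
  have "M n (M n (pl n l (m+L) (b m L)) (pl n (l+m) (Suc t) (b 1 t))) (pl n 0 (Suc (l+m)) (Inv (Suc (l+m)) (b (l+m) 1)))
   = M n (M n (pl n l (Suc t) (b 1 t)) (pl n (Suc l) (m + (L - 1)) (b m (L - 1)))) (pl n 0 (Suc l) (Inv (Suc l) (b l 1)))"
    by (rule I2) (use e assms in auto)
  then show ?thesis unfolding Q_def e(2,3,4) .
qed


lemma iota_one: "homW_iota G s b j (I j, w) = (Inv (Suc j) (b j 1), w)"
  unfolding homW_iota_def by simp

lemma K2: assumes "m + L \<le> n" "1 \<le> L" "\<alpha> \<in> C n" "h \<in> C m" "v \<in> C (n-m)"
  shows "dV L (Ind L \<alpha> h w (gen (v,()))) - Ind (L-1) \<alpha> h w (d0 (n-m) L (gen (v,()))) \<in> relV (L-1)"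
proof -
  define j where "j = n - L"
  define l where "l = n - L - m"
  have e: "n - (L-1) = Suc j" "n - (L-1) - m = Suc l" "n - m - L = l" "n - L = j" "n - L - m = l"
    using assms unfolding j_def l_def by auto
  define Bj where "Bj = Inv (Suc j) (b j 1)"
  define Kl where "Kl = Inv (Suc l) (b l 1)"
  define F where "F t = pl n j (Suc t) (b 1 t)" for t
  define F' where "F' t = pl (n-m) l (Suc t) (b 1 t)" for t
  define bt where "bt t = pl n l (Suc t) (b 1 t)" for t
  have Bjc: "Bj \<in> C (Suc j)" unfolding Bj_def by simp
  have Klc: "Kl \<in> C (Suc l)" unfolding Kl_def by simp
  have face: "ctil_face G s b n L t = F t" if "t < L" for t
    unfolding F_def using face_pl[OF that, of n] assms e by simp
  have face': "ctil_face G s b (n-m) L t = F' t" if "t < L" for t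
    unfolding F'_def using face_pl[OF that, of "n-m"] assms e by simp
  have Fc: "F t \<in> C n" "F' t \<in> C (n-m)" "bt t \<in> C n" if "t < L" for t
    unfolding F_def F'_def bt_def using assms that e by (auto intro!: pl_closed)
  define \<beta> where "\<beta> = M n \<alpha> (sv v h)"
  have \<beta>c: "\<beta> \<in> C n" unfolding \<beta>_def using assms by auto
  have i2: "M n (M n (Q L) (F t)) (pl n 0 (Suc j) Bj) = M n (M n (bt t) (Q (L-1))) (pl n 0 (Suc l) Kl)"
    if "t < L" for t
    unfolding F_def bt_def Bj_def Kl_def using I2V[OF assms(1) that] e by simp
  have svF: "sv (M (n-m) v (F' t)) h = M n (sv v h) (bt t)" if "t < L" for t
  proof -
    have "sv (M (n-m) v (F' t)) h = M n (sv v h) (sv (F' t) (I m))"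
      using sv_mult[of v h "F' t" "I m"] assms Fc[OF that] by simp
    also have "sv (F' t) (I m) = bt t"
      unfolding sv_def F'_def bt_def using pl_nest[of l "Suc t" "n-m" 0 n "b 1 t"] assms that e by simp
    finally show ?thesis .
  qed
  have trm: "gen (M n (M n \<beta> (Q L)) (F t), (Inv (Suc j) (b j 1), w)) -
      gen (M n (M n \<alpha> (sv (M (n-m) v (F' t)) h)) (Q (L-1)), (I (n-(L-1)), w)) \<in> relV (L-1)"
    if t: "t < L" for t
  proof -
    define \<beta>' where "\<beta>' = M n (M n \<beta> (Q L)) (F t)"
    have \<beta>'c: "\<beta>' \<in> C n" unfolding \<beta>'_def using \<beta>c Fc[OF t] assms by auto
    have r1: "gen (\<beta>', (Bj, w)) - gen (M n \<beta>' (pl n 0 (Suc j) Bj), (I (Suc j), w)) \<in> relV (L-1)"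
      using RV_bal'[of "L-1" \<beta>' Bj w] assms \<beta>'c Bjc e by simp
    have eq: "M n \<beta>' (pl n 0 (Suc j) Bj) = M n (M n (M n \<alpha> (sv (M (n-m) v (F' t)) h)) (Q (L-1))) (pl n 0 (Suc l) Kl)"
    proof -
      have "M n \<beta>' (pl n 0 (Suc j) Bj) = M n \<beta> (M n (M n (Q L) (F t)) (pl n 0 (Suc j) Bj))"
        unfolding \<beta>'_def using \<beta>c Fc[OF t] assms Bjc e by (simp add: m_assoc)
      also have "\<dots> = M n \<beta> (M n (M n (bt t) (Q (L-1))) (pl n 0 (Suc l) Kl))" using i2[OF t] by simp
      also have "\<dots> = M n (M n (M n \<alpha> (sv (M (n-m) v (F' t)) h)) (Q (L-1))) (pl n 0 (Suc l) Kl)"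
        unfolding svF[OF t] \<beta>_def using assms Fc[OF t] Klc e by (simp add: m_assoc)
      finally show ?thesis .
    qed
    have r2: "gen (M n (M n (M n \<alpha> (sv (M (n-m) v (F' t)) h)) (Q (L-1))) (pl n 0 (Suc l) Kl), (I (Suc j), w)) -
              gen (M n (M n \<alpha> (sv (M (n-m) v (F' t)) h)) (Q (L-1)), (I (Suc j), w)) \<in> relV (L-1)"
    proof -
      have A: "L - 1 + m \<le> n" using assms by arith
      have B: "M n (M n \<alpha> (sv (M (n-m) v (F' t)) h)) (Q (L-1)) \<in> C n" using assms Fc[OF t] by auto
      show ?thesis using RV_coset[OF A B, unfolded e(2), OF Klc] unfolding e(1) .
    qed
    have sumeq: "(gen (\<beta>', (Bj, w)) - gen (M n \<beta>' (pl n 0 (Suc j) Bj), (I (Suc j), w))) +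
       (gen (M n (M n (M n \<alpha> (sv (M (n-m) v (F' t)) h)) (Q (L-1))) (pl n 0 (Suc l) Kl), (I (Suc j), w)) -
              gen (M n (M n \<alpha> (sv (M (n-m) v (F' t)) h)) (Q (L-1)), (I (Suc j), w)))
      = gen (\<beta>', (Bj, w)) - gen (M n (M n \<alpha> (sv (M (n-m) v (F' t)) h)) (Q (L-1)), (I (Suc j), w))"
      unfolding eq by simp
    have "gen (\<beta>', (Bj, w)) - gen (M n (M n \<alpha> (sv (M (n-m) v (F' t)) h)) (Q (L-1)), (I (Suc j), w)) \<in> relV (L-1)"
      using rels_add[OF r1 r2] unfolding sumeq .
    then show ?thesis unfolding \<beta>'_def Bj_def e .
  qed
  have lhs: "dV L (Ind L \<alpha> h w (gen (v,()))) = (\<Sum>t<L. smul ((-1)^t) (gen (M n (M n \<beta> (Q L)) (F t), (Inv (Suc j) (b j 1), w))))"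
    unfolding Ind_gen d_gen \<beta>_def e(4)[symmetric] iota_one using face by simp
  have rhs: "Ind (L-1) \<alpha> h w (d0 (n-m) L (gen (v,()))) =
     (\<Sum>t<L. smul ((-1)^t) (gen (M n (M n \<alpha> (sv (M (n-m) v (F' t)) h)) (Q (L-1)), (I (n-(L-1)), w))))"
    unfolding d_gen Ind_def lin_ext_sum lin_ext_smul using face' by simp
  show ?thesis unfolding lhs rhs sum_subtractf[symmetric] smul_diff[symmetric]
    by (rule rels_sum, rule rels_smul, rule trm) simp
qed


definition gam :: "nat \<Rightarrow> 'g \<Rightarrow> 'g \<Rightarrow> 'g" where
  "gam q g f = M n (M n g (pl n 0 (n-q) f)) (Inv n (Q q))"

definition Phi :: "(nat \<Rightarrow> 'g \<times> unit \<Rightarrow> ('g \<times> unit \<Rightarrow>\<^sub>0 'r)) \<Rightarrow> nat \<Rightarrow> 'g \<times> ('g \<times> 'w) \<Rightarrow> ('g \<times> ('g \<times> 'w) \<Rightarrow>\<^sub>0 'r)" where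
  "Phi \<phi> q x = (case x of (g, (f, w)) \<Rightarrow>
     Ind (Suc q) (repV (gam q g f)) (snd (decV (gam q g f))) w (\<phi> q (fst (decV (gam q g f)), ())))"

lemma gam_closed[simp,intro]: "m + q \<le> n \<Longrightarrow> g \<in> C n \<Longrightarrow> f \<in> C (n-q) \<Longrightarrow> gam q g f \<in> C n"
  unfolding gam_def by (auto intro!: pl_closed)

lemma K1: assumes "m + q \<le> n" "g \<in> C n" "f \<in> C (n-q)"
  shows "gen (g, (f, w)) - Ind q (repV (gam q g f)) (snd (decV (gam q g f))) w (gen (fst (decV (gam q g f)), ()))
         \<in> relV q"
proof -
  have mn: "m \<le> n" using assms by simp
  note d = dec_ok[OF mn gam_closed[OF assms]]
  have "M n (M n (repV (gam q g f)) (sv (fst (decV (gam q g f))) (snd (decV (gam q g f))))) (Q q)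
      = M n g (pl n 0 (n-q) f)"
    using d[THEN conjunct2, THEN conjunct2, symmetric] assms unfolding gam_def by (simp add: )
  then show ?thesis unfolding Ind_gen using RV_bal'[of q g f w] assms by simp
qed

lemma GK3: assumes "m + q \<le> n" "1 \<le> q" "t < q" "g \<in> C n" "f \<in> C (n-q)"
  shows "gam (q-1) (M n g (ctil_face G s b n q t)) (fst (homW_iota G s b (n-q) (f, w))) =
         M n (gam q g f) (sv (M (n-m) (ctil_face G s b (n-m) q t)
              (pl (n-m) 0 (Suc (n-q-m)) (Inv (Suc (n-q-m)) (b (n-q-m) 1)))) (I m))"
proof -
  define j where "j = n - q"
  define l where "l = n - q - m"
  have e: "n - (q-1) = Suc j" "n - (q-1) - m = Suc l" "n - m - q = l" "n - q = j" "n - q - m = l" "n - m - (q-1) = Suc l" "j - m = l"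
    using assms unfolding j_def l_def by auto
  define Bj where "Bj = Inv (Suc j) (b j 1)"
  define \<kappa> where "\<kappa> = Inv (Suc l) (b l 1)"
  define PB where "PB = pl n 0 (Suc j) (b j 1)"
  define F where "F = pl n j (Suc t) (b 1 t)"
  define F' where "F' = pl (n-m) l (Suc t) (b 1 t)"
  define bt where "bt = pl n l (Suc t) (b 1 t)"
  define K where "K = pl n 0 (Suc l) \<kappa>"
  have fc: "f \<in> C j" using assms e by simp
  have cl: "PB \<in> C n" "F \<in> C n" "F' \<in> C (n-m)" "bt \<in> C n" "K \<in> C n" "pl n 0 j f \<in> C n" "pl n 1 j f \<in> C n"
    "\<kappa> \<in> C (Suc l)" "Bj \<in> C (Suc j)" "pl (n-m) 0 (Suc l) \<kappa> \<in> C (n-m)"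
    unfolding PB_def F_def F'_def bt_def K_def \<kappa>_def Bj_def using assms e fc by (auto intro!: pl_closed)
  have face: "ctil_face G s b n q t = F" unfolding F_def using face_pl[OF assms(3), of n] assms e by simp
  have face': "ctil_face G s b (n-m) q t = F'" unfolding F'_def using face_pl[OF assms(3), of "n-m"] assms e by simp
  have iota: "fst (homW_iota G s b j (f, w)) = M (Suc j) Bj (s 1 j (I 1) f)"
    unfolding homW_iota_def Bj_def by simp
  have plB: "pl n 0 (Suc j) (M (Suc j) Bj (s 1 j (I 1) f)) = M n (Inv n PB) (pl n 1 j f)"
  proof -
    have "s 1 j (I 1) f = pl (Suc j) 1 j f" using pl_right[OF fc, of 1] by simp
    moreover have "pl n 0 (Suc j) (pl (Suc j) 1 j f) = pl n 1 j f"
      using pl_nest[of 1 j "Suc j" 0 n f] assms e fc by simp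
    moreover have "pl n 0 (Suc j) Bj = Inv n PB" unfolding Bj_def PB_def using pl_inv[of 0 "Suc j" n "b j 1"] assms e by simp
    moreover have "s 1 j (I 1) f \<in> C (Suc j)" using s_closed[of "I 1" 1 f j] fc by simp
    ultimately show ?thesis using pl_mult[of 0 "Suc j" n Bj "s 1 j (I 1) f"] cl assms e by simp
  qed
  have nat: "M n PB (pl n 0 j f) = M n (pl n 1 j f) PB"
  proof -
    have "M n (pl n 0 (j+1) (b j 1)) (M n (pl n 0 j f) (pl n (0+j) 1 (I 1))) =
          M n (M n (pl n 0 1 (I 1)) (pl n (0+1) j f)) (pl n 0 (j+1) (b j 1))"
      by (rule pl_nat) (use assms e fc in auto)
    then show ?thesis unfolding PB_def using assms e by simp
  qed
  have nat': "M n (Inv n PB) (pl n 1 j f) = M n (pl n 0 j f) (Inv n PB)"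
  proof -
    have "M n (Inv n PB) (M n (M n (pl n 1 j f) PB) (Inv n PB)) = M n (Inv n PB) (M n (M n PB (pl n 0 j f)) (Inv n PB))"
      using nat by simp
    then show ?thesis using cl by (simp add: m_assoc[symmetric])
  qed
  have fcomm: "M n F (pl n 0 j f) = M n (pl n 0 j f) F"
    unfolding F_def by (rule pl_comm[symmetric]) (use assms e fc in auto)
  have i2: "M n (M n (Q q) F) (Inv n PB) = M n (M n bt (Q (q-1))) K"
  proof -
    have "pl n 0 (Suc (n-q)) (Inv (Suc (n-q)) (b (n-q) 1)) = Inv n PB"
      unfolding PB_def using pl_inv[of 0 "Suc j" n "b j 1"] assms e by simp
    moreover have "pl n 0 (Suc (n-q-m)) (Inv (Suc (n-q-m)) (b (n-q-m) 1)) = K" unfolding K_def \<kappa>_def e(5) ..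
    ultimately show ?thesis using I2V[OF _ assms(3)] assms unfolding F_def bt_def e by simp
  qed
  have Kc: "M n K (Q (q-1)) = M n (Q (q-1)) K"
  proof -
    have "M n (pl n 0 (n-(q-1)-m) \<kappa>) (Q (q-1)) = M n (Q (q-1)) (pl n 0 (n-(q-1)-m) \<kappa>)"
      by (rule Q_coset) (use assms cl e in auto)
    then show ?thesis unfolding K_def e(2) .
  qed
  have svc: "sv (M (n-m) F' (pl (n-m) 0 (Suc l) \<kappa>)) (I m) = M n bt K"
  proof -
    have "sv (M (n-m) F' (pl (n-m) 0 (Suc l) \<kappa>)) (I m) = M n (sv F' (I m)) (sv (pl (n-m) 0 (Suc l) \<kappa>) (I m))"
      using sv_mult[of F' "I m" "pl (n-m) 0 (Suc l) \<kappa>" "I m"] assms cl by simp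
    moreover have "sv F' (I m) = bt"
      unfolding sv_def F'_def bt_def using pl_nest[of l "Suc t" "n-m" 0 n "b 1 t"] assms e by simp
    moreover have "sv (pl (n-m) 0 (Suc l) \<kappa>) (I m) = K"
      unfolding sv_def K_def using pl_nest[of 0 "Suc l" "n-m" 0 n \<kappa>] assms e cl by simp
    ultimately show ?thesis by simp
  qed
  have gq: "M n (gam q g f) (Q q) = M n g (pl n 0 j f)" unfolding gam_def e using assms cl fc by simp
  have "gam (q-1) (M n g F) (M (Suc j) Bj (s 1 j (I 1) f)) =
        M n (M n (M n g F) (M n (Inv n PB) (pl n 1 j f))) (Inv n (Q (q-1)))"
    unfolding gam_def e plB ..
  also have "\<dots> = M n (M n (M n (M n g (pl n 0 j f)) F) (Inv n PB)) (Inv n (Q (q-1)))"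
  proof -
    have fc': "M n (M n x F) (pl n 0 j f) = M n (M n x (pl n 0 j f)) F" if "x \<in> C n" for x
      using that cl fcomm by (simp add: m_assoc)
    show ?thesis unfolding nat' using cl assms fc' by (simp add: m_assoc[symmetric])
  qed
  also have "\<dots> = M n (M n (gam q g f) (M n (M n (Q q) F) (Inv n PB))) (Inv n (Q (q-1)))"
    unfolding gq[symmetric] using cl assms by (simp add: m_assoc)
  also have "\<dots> = M n (gam q g f) (M n bt K)"
  proof -
    have Qc: "Q (q-1) \<in> C n" "Q q \<in> C n" using assms by auto
    have "M n (Q (q-1)) (M n K (Inv n (Q (q-1)))) = K"
      using Kc[symmetric] cl Qc by (simp add: m_assoc[symmetric])
    then show ?thesis unfolding i2 using cl assms Qc by (simp add: m_assoc)
  qed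
  finally show ?thesis unfolding face face' iota svc \<kappa>_def[symmetric] e .
qed


lemma K3: assumes "m + q \<le> n" "1 \<le> q" "g \<in> C n" "f \<in> C (n-q)" "HP (n-m) \<phi> (q-1)"
  shows "lin_ext (Phi \<phi> (q-1)) (dV q (gen (g,(f,w)))) =
    Ind q (repV (gam q g f)) (snd (decV (gam q g f))) w (lin_ext (\<phi> (q-1)) (d0 (n-m) q (gen (fst (decV (gam q g f)), ()))))"
proof -
  have mn: "m \<le> n" using assms by simp
  define \<gamma> where "\<gamma> = gam q g f"
  have \<gamma>c: "\<gamma> \<in> C n" unfolding \<gamma>_def using assms by auto
  define \<alpha> where "\<alpha> = repV \<gamma>"
  define v where "v = fst (decV \<gamma>)"
  define h where "h = snd (decV \<gamma>)"
  have d: "v \<in> C (n-m)" "h \<in> C m" "\<gamma> = M n \<alpha> (sv v h)" "\<alpha> \<in> C n"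
    using dec_ok[OF mn \<gamma>c] rep_ok[OF mn \<gamma>c] unfolding v_def h_def \<alpha>_def by auto
  define \<kappa> where "\<kappa> = Inv (Suc (n-q-m)) (b (n-q-m) 1)"
  have e\<kappa>: "n - m - (q-1) = Suc (n - q - m)" using assms by arith
  have \<kappa>c: "\<kappa> \<in> C (n-m-(q-1))" unfolding e\<kappa> \<kappa>_def by (rule inv_closed) simp
  have \<kappa>p: "pl (n-m) 0 (Suc (n-q-m)) \<kappa> = pl (n-m) 0 (n-m-(q-1)) \<kappa>" unfolding e\<kappa> ..
  have iota: "homW_iota G s b (n-q) (f, w) = (fst (homW_iota G s b (n-q) (f, w)), w)"
    unfolding homW_iota_def by simp
  have per: "Phi \<phi> (q-1) (M n g (ctil_face G s b n q t), homW_iota G s b (n-q) (f, w))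
     = Ind q \<alpha> h w (\<phi> (q-1) (M (n-m) v (ctil_face G s b (n-m) q t), ()))" if t: "t < q" for t
  proof -
    define F' where "F' = ctil_face G s b (n-m) q t"
    have F'c: "F' \<in> C (n-m)" unfolding F'_def using t assms by auto
    define c where "c = M (n-m) F' (pl (n-m) 0 (n-m-(q-1)) \<kappa>)"
    have pc: "pl (n-m) 0 (n-m-(q-1)) \<kappa> \<in> C (n-m)" using \<kappa>c assms by (auto intro!: pl_closed)
    have cc: "c \<in> C (n-m)" unfolding c_def using F'c pc by auto
    define \<gamma>t where "\<gamma>t = gam (q-1) (M n g (ctil_face G s b n q t)) (fst (homW_iota G s b (n-q) (f, w)))"
    have gt: "\<gamma>t = M n \<gamma> (sv c (I m))"
      unfolding \<gamma>t_def \<gamma>_def c_def F'_def using GK3[OF assms(1,2) t assms(3,4), of w] \<kappa>p unfolding \<kappa>_def by simp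
    have gtc: "\<gamma>t \<in> C n" unfolding gt using \<gamma>c cc mn by auto
    have rt: "repV \<gamma>t = \<alpha>" unfolding gt \<alpha>_def by (rule rep_inv) (use mn \<gamma>c cc in auto)
    have gt2: "\<gamma>t = M n (repV \<gamma>t) (sv (M (n-m) v c) h)"
      unfolding rt using gt d cc mn by (simp add: m_assoc sv_mult)
    have dt: "decV \<gamma>t = (M (n-m) v c, h)"
      by (rule dec_uniq[OF mn gtc _ _ gt2]) (use d cc in auto)
    have hp: "\<phi> (q-1) (M (n-m) v c, ()) = \<phi> (q-1) (M (n-m) v F', ())"
    proof -
      have "M (n-m) v c = M (n-m) (M (n-m) v F') (pl (n-m) 0 (n-m-(q-1)) \<kappa>)"
        unfolding c_def using d F'c pc by (simp add: m_assoc)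
      moreover have "M (n-m) v F' \<in> C (n-m)" using d F'c by auto
      ultimately show ?thesis using assms(5) \<kappa>c unfolding HP_def by auto
    qed
    have qq: "Suc (q-1) = q" using assms by simp
    show ?thesis
      apply (subst iota)
      unfolding Phi_def prod.case \<gamma>t_def[symmetric] qq dt rt fst_conv snd_conv hp F'_def ..
  qed
  have "lin_ext (Phi \<phi> (q-1)) (dV q (gen (g,(f,w)))) = (\<Sum>t<q. smul ((-1)^t) (Ind q \<alpha> h w (\<phi> (q-1) (M (n-m) v (ctil_face G s b (n-m) q t), ()))))"
    unfolding d_gen lin_ext_sum lin_ext_smul lin_ext_gen using per by simp
  also have "\<dots> = Ind q \<alpha> h w (lin_ext (\<phi> (q-1)) (d0 (n-m) q (gen (v, ()))))"
    unfolding d_gen lin_ext_sum lin_ext_smul lin_ext_gen Ind_def by simp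
  finally show ?thesis unfolding \<alpha>_def h_def v_def \<gamma>_def .
qed


end

context cv
begin

lemma dec_shift: assumes "m \<le> n" "\<gamma> \<in> C n" "c \<in> C (n-m)" "d \<in> C m"
  shows "repV (M n \<gamma> (sv c d)) = repV \<gamma>"
    and "decV (M n \<gamma> (sv c d)) = (M (n-m) (fst (decV \<gamma>)) c, M m (snd (decV \<gamma>)) d)"
proof -
  show r: "repV (M n \<gamma> (sv c d)) = repV \<gamma>" by (rule rep_inv) (use assms in auto)
  have d: "fst (decV \<gamma>) \<in> C (n-m)" "snd (decV \<gamma>) \<in> C m" "\<gamma> = M n (repV \<gamma>) (sv (fst (decV \<gamma>)) (snd (decV \<gamma>)))"
    "repV \<gamma> \<in> C n"
    using dec_ok[OF assms(1,2)] rep_ok[OF assms(1,2)] by auto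
  have "M n \<gamma> (sv c d) = M n (repV (M n \<gamma> (sv c d))) (sv (M (n-m) (fst (decV \<gamma>)) c) (M m (snd (decV \<gamma>)) d))"
  proof -
    have "M n \<gamma> (sv c d) = M n (M n (repV \<gamma>) (sv (fst (decV \<gamma>)) (snd (decV \<gamma>)))) (sv c d)"
      using arg_cong[OF d(3), of "\<lambda>z. M n z (sv c d)"] .
    also have "\<dots> = M n (repV \<gamma>) (sv (M (n-m) (fst (decV \<gamma>)) c) (M m (snd (decV \<gamma>)) d))"
      using d(1,2,4) assms by (simp add: m_assoc sv_mult)
    finally show ?thesis unfolding r .
  qed
  then show "decV (M n \<gamma> (sv c d)) = (M (n-m) (fst (decV \<gamma>)) c, M m (snd (decV \<gamma>)) d)"
    by (intro dec_uniq) (use assms d in auto)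
qed

lemma gam_t: assumes "m + q \<le> n" "g \<in> C n" "t \<in> C (n-q)" "f \<in> C (n-q)"
  shows "gam q (M n g (pl n 0 (n-q) t)) f = gam q g (M (n-q) t f)"
  unfolding gam_def using assms by (simp add: m_assoc pl_mult)

lemma gam_k: assumes "m + q \<le> n" "g \<in> C n" "f \<in> C (n-q)" "\<kappa> \<in> C (n-q-m)"
  shows "gam q g (M (n-q) f (s (n-q-m) m \<kappa> (I m))) = M n (gam q g f) (sv (pl (n-m) 0 (n-m-q) \<kappa>) (I m))"
proof -
  have e: "n - q - m + m = n - q" "n - m - q = n - q - m" using assms by auto
  have sk: "s (n-q-m) m \<kappa> (I m) = pl (n-q) 0 (n-q-m) \<kappa>" using pl_left[OF assms(4), of m] e by simp
  have skc: "pl (n-q) 0 (n-q-m) \<kappa> \<in> C (n-q)" using assms by (auto intro!: pl_closed)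
  have n1: "pl n 0 (n-q) (pl (n-q) 0 (n-q-m) \<kappa>) = pl n 0 (n-q-m) \<kappa>"
    using pl_nest[of 0 "n-q-m" "n-q" 0 n \<kappa>] assms by simp
  have n2: "sv (pl (n-m) 0 (n-m-q) \<kappa>) (I m) = pl n 0 (n-q-m) \<kappa>"
    unfolding sv_def e using pl_nest[of 0 "n-q-m" "n-m" 0 n \<kappa>] assms by simp
  have kc: "pl n 0 (n-q-m) \<kappa> \<in> C n" using assms by (auto intro!: pl_closed)
  have Qc: "Q q \<in> C n" using assms by auto
  have qc: "M n (pl n 0 (n-q-m) \<kappa>) (Inv n (Q q)) = M n (Inv n (Q q)) (pl n 0 (n-q-m) \<kappa>)"
  proof -
    have "M n (Inv n (Q q)) (M n (M n (pl n 0 (n-q-m) \<kappa>) (Q q)) (Inv n (Q q))) =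
          M n (Inv n (Q q)) (M n (M n (Q q) (pl n 0 (n-q-m) \<kappa>)) (Inv n (Q q)))"
      using Q_coset[OF _ assms(4)] assms by simp
    then show ?thesis using kc Qc by (simp add: m_assoc[symmetric])
  qed
  have pm: "pl n 0 (n-q) (M (n-q) f (pl (n-q) 0 (n-q-m) \<kappa>)) = M n (pl n 0 (n-q) f) (pl n 0 (n-q-m) \<kappa>)"
    using pl_mult[of 0 "n-q" n f "pl (n-q) 0 (n-q-m) \<kappa>"] assms skc n1 by simp
  have fc: "pl n 0 (n-q) f \<in> C n" using assms by (auto intro!: pl_closed)
  show ?thesis unfolding gam_def sk n2 pm using kc Qc qc fc assms by (simp add: m_assoc)
qed

lemma gam_h: assumes "m + q \<le> n" "g \<in> C n" "f \<in> C (n-q)" "h' \<in> C m"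
  shows "gam q g (M (n-q) f (s (n-q-m) m (I (n-q-m)) h')) = M n (gam q g f) (sv (I (n-m)) h')"
proof -
  have e: "n - q - m + m = n - q" using assms by auto
  have sk: "s (n-q-m) m (I (n-q-m)) h' = pl (n-q) (n-q-m) m h'" using pl_right[OF assms(4), of "n-q-m"] e by simp
  have skc: "pl (n-q) (n-q-m) m h' \<in> C (n-q)" using assms by (auto intro!: pl_closed)
  have n1: "pl n 0 (n-q) (pl (n-q) (n-q-m) m h') = pl n (n-q-m) m h'"
    using pl_nest[of "n-q-m" m "n-q" 0 n h'] assms by simp
  have n2: "sv (I (n-m)) h' = pl n (n-m) m h'" unfolding sv_def using assms by simp
  have c1: "pl n (n-q-m) m h' \<in> C n" "pl n (n-m) m h' \<in> C n" using assms by (auto intro!: pl_closed)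
  have Qc: "Q q \<in> C n" using assms by auto
  have qc: "M n (pl n (n-q-m) m h') (Inv n (Q q)) = M n (Inv n (Q q)) (pl n (n-m) m h')"
  proof -
    have "M n (Inv n (Q q)) (M n (M n (Q q) (pl n (n-q-m) m h')) (Inv n (Q q))) =
          M n (Inv n (Q q)) (M n (M n (pl n (n-m) m h') (Q q)) (Inv n (Q q)))"
      using Q_nat[OF _ assms(4)] assms by simp
    then show ?thesis using c1 Qc by (simp add: m_assoc[symmetric])
  qed
  have pm: "pl n 0 (n-q) (M (n-q) f (pl (n-q) (n-q-m) m h')) = M n (pl n 0 (n-q) f) (pl n (n-q-m) m h')"
    using pl_mult[of 0 "n-q" n f "pl (n-q) (n-q-m) m h'"] assms skc n1 by simp
  have fc: "pl n 0 (n-q) f \<in> C n" using assms by (auto intro!: pl_closed)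
  show ?thesis unfolding gam_def sk n2 pm using c1 Qc qc fc assms by (simp add: m_assoc)
qed


lemma Phi_val: "Phi \<phi> q (g, (f, w)) = Ind (Suc q) (repV (gam q g f)) (snd (decV (gam q g f))) w (\<phi> q (fst (decV (gam q g f)), ()))"
  unfolding Phi_def by simp

lemma Ind_rel: assumes "e \<in> free_on (gens0 (n-m) q')" "\<And>v'. v' \<in> C (n-m) \<Longrightarrow> q' \<le> n - m \<Longrightarrow> X v' \<in> relV q'"
  shows "lin_ext (\<lambda>(v, _). X v) e \<in> relV q'"
  by (rule lin_ext_rels) (use assms in \<open>auto dest: free_on_keys\<close>)

lemma keys0: "a \<in> Poly_Mapping.keys e \<Longrightarrow> e \<in> free_on (gens0 \<nu> q') \<Longrightarrow> \<exists>v. a = (v, ()) \<and> v \<in> C \<nu> \<and> q' \<le> \<nu>"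
  by (cases a) (auto dest: free_on_keys)

lemma Phi_free: assumes "HP (n-m) \<phi> q" "(g, (f, w)) \<in> gensV q"
  shows "Phi \<phi> q (g, (f, w)) \<in> free_on (gensV (Suc q))"
proof -
  have a: "m + q \<le> n" "g \<in> C n" "f \<in> C (n-q)" using assms(2) by auto
  have mn: "m \<le> n" using a by simp
  define \<gamma> where "\<gamma> = gam q g f"
  have \<gamma>c: "\<gamma> \<in> C n" unfolding \<gamma>_def using a by auto
  have d: "fst (decV \<gamma>) \<in> C (n-m)" "snd (decV \<gamma>) \<in> C m" "repV \<gamma> \<in> C n"
    using dec_ok[OF mn \<gamma>c] rep_ok[OF mn \<gamma>c] by auto
  have e: "\<phi> q (fst (decV \<gamma>), ()) \<in> free_on (gens0 (n-m) (Suc q))" using assms(1) d unfolding HP_def by auto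
  show ?thesis unfolding Phi_val \<gamma>_def[symmetric] Ind_def
    by (rule free_on_lin_ext) (use e d mn in \<open>auto dest!: free_on_keys intro!: free_on_gen\<close>)
qed

lemma K5: assumes "m + q \<le> n" "HP (n-m) \<phi> q" "y \<in> relV q"
  shows "lin_ext (Phi \<phi> q) y \<in> relV (Suc q)"
  using assms(3) unfolding ctil_rels_def[of G s "homW_gens G m" _ _ n q]
proof (rule lin_ext_rels_map[rotated])
  have mn: "m \<le> n" using assms by simp
  fix y assume "y \<in> {gen (M n g (s (n-q) q t (I q)), x) - gen (g, homW_act G (n-q) t x) | g t x.
       q \<le> n \<and> g \<in> C n \<and> t \<in> C (n-q) \<and> x \<in> homW_gens G m (n-q)} \<union>
     {lin_ext (\<lambda>x. gen (g, x)) k | g k. q \<le> n \<and> g \<in> C n \<and> k \<in> homW_rels G s sm actW m (n-q)}"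
  then consider (S1) g t f w where "y = gen (M n g (s (n-q) q t (I q)), (f, w)) - gen (g, homW_act G (n-q) t (f, w))"
      "g \<in> C n" "t \<in> C (n-q)" "f \<in> C (n-q)"
    | (S2) g k where "y = lin_ext (\<lambda>x. gen (g, x)) k" "g \<in> C n" "k \<in> homW_rels G s sm actW m (n-q)"
    by (auto simp: homW_gens_def)
  then show "lin_ext (Phi \<phi> q) y \<in> relV (Suc q)"
  proof cases
    case S1
    have "gam q (M n g (s (n-q) q t (I q))) f = gam q g (M (n-q) t f)"
      using gam_t[OF assms(1) S1(2,3,4)] lift_pl[OF S1(3)] assms by simp
    then show ?thesis unfolding S1(1) lin_ext_diff lin_ext_gen homW_act_def using Phi_val by simp
  next
    case S2
    have lv: "lin_ext (Phi \<phi> q) y = lin_ext (\<lambda>x. Phi \<phi> q (g, x)) k"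
      unfolding S2(1) lin_ext_comp by simp
    have m2: "m \<le> n - q" using assms by simp
    from S2(3)[unfolded homW_rels_def if_P[OF m2]]
    consider (a) f w w' where "k = gen (f, w + w') - gen (f, w) - gen (f, w')" "f \<in> C (n-q)"
      | (b) f c w where "k = gen (f, sm c w) - smul c (gen (f, w))" "f \<in> C (n-q)"
      | (c) f \<kappa> w where "k = gen (M (n-q) f (s (n-q-m) m \<kappa> (I m)), w) - gen (f, w)" "f \<in> C (n-q)" "\<kappa> \<in> C (n-q-m)"
      | (d) f h' w where "k = gen (M (n-q) f (s (n-q-m) m (I (n-q-m)) h'), w) - gen (f, actW h' w)" "f \<in> C (n-q)" "h' \<in> C m"
      by blast
    then show ?thesis
    proof cases
      case a
      define \<gamma> where "\<gamma> = gam q g f"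
      have \<gamma>c: "\<gamma> \<in> C n" unfolding \<gamma>_def using a S2 assms by auto
      have d: "fst (decV \<gamma>) \<in> C (n-m)" "snd (decV \<gamma>) \<in> C m" "repV \<gamma> \<in> C n"
        using dec_ok[OF mn \<gamma>c] rep_ok[OF mn \<gamma>c] by auto
      have e: "\<phi> q (fst (decV \<gamma>), ()) \<in> free_on (gens0 (n-m) (Suc q))" using assms(2) d unfolding HP_def by auto
      show ?thesis unfolding lv a(1) lin_ext_diff lin_ext_gen Phi_val \<gamma>_def[symmetric] Ind_def lin_ext_linear_comb
        by (rule lin_ext_rels) (use d mn in \<open>auto dest!: keys0[OF _ e] intro!: RV_K1\<close>)
    next
      case b
      define \<gamma> where "\<gamma> = gam q g f"
      have \<gamma>c: "\<gamma> \<in> C n" unfolding \<gamma>_def using b S2 assms by auto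
      have d: "fst (decV \<gamma>) \<in> C (n-m)" "snd (decV \<gamma>) \<in> C m" "repV \<gamma> \<in> C n"
        using dec_ok[OF mn \<gamma>c] rep_ok[OF mn \<gamma>c] by auto
      have e: "\<phi> q (fst (decV \<gamma>), ()) \<in> free_on (gens0 (n-m) (Suc q))" using assms(2) d unfolding HP_def by auto
      have sm: "smul c (lin_ext \<psi> x) = lin_ext (\<lambda>a. smul c (\<psi> a)) x" for \<psi> :: "'g \<times> unit \<Rightarrow> ('g \<times> ('g \<times> 'w) \<Rightarrow>\<^sub>0 'r)" and x
        unfolding lin_ext_def smul_sum by (simp add: smul_smul mult.commute)
      show ?thesis unfolding lv b(1) lin_ext_diff lin_ext_smul lin_ext_gen Phi_val \<gamma>_def[symmetric] Ind_def sm
        lin_ext_linear_comb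
        by (rule lin_ext_rels) (use d mn in \<open>auto dest!: keys0[OF _ e] intro!: RV_K2\<close>)
    next
      case c
      define \<gamma> where "\<gamma> = gam q g f"
      have \<gamma>c: "\<gamma> \<in> C n" unfolding \<gamma>_def using c S2 assms by auto
      have e: "n - m - q = n - q - m" by simp
      have kc: "pl (n-m) 0 (n-m-q) \<kappa> \<in> C (n-m)" using c assms e by (auto intro!: pl_closed)
      have g': "gam q g (M (n-q) f (s (n-q-m) m \<kappa> (I m))) = M n \<gamma> (sv (pl (n-m) 0 (n-m-q) \<kappa>) (I m))"
        unfolding \<gamma>_def by (rule gam_k) (use assms S2 c in auto)
      have d: "fst (decV \<gamma>) \<in> C (n-m)" "snd (decV \<gamma>) \<in> C m"
        using dec_ok[OF mn \<gamma>c] by auto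
      have hp: "\<phi> q (M (n-m) (fst (decV \<gamma>)) (pl (n-m) 0 (n-m-q) \<kappa>), ()) = \<phi> q (fst (decV \<gamma>), ())"
        using assms(2) d c e unfolding HP_def by auto
      show ?thesis unfolding lv c(1) lin_ext_diff lin_ext_gen Phi_val g' \<gamma>_def[symmetric]
        dec_shift[OF mn \<gamma>c kc one_closed] using hp d by simp
    next
      case d
      define \<gamma> where "\<gamma> = gam q g f"
      have \<gamma>c: "\<gamma> \<in> C n" unfolding \<gamma>_def using d S2 assms by auto
      have g': "gam q g (M (n-q) f (s (n-q-m) m (I (n-q-m)) h')) = M n \<gamma> (sv (I (n-m)) h')"
        unfolding \<gamma>_def by (rule gam_h) (use assms S2 d in auto)
      have dd: "fst (decV \<gamma>) \<in> C (n-m)" "snd (decV \<gamma>) \<in> C m" "repV \<gamma> \<in> C n"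
        using dec_ok[OF mn \<gamma>c] rep_ok[OF mn \<gamma>c] by auto
      have e: "\<phi> q (fst (decV \<gamma>), ()) \<in> free_on (gens0 (n-m) (Suc q))" using assms(2) dd unfolding HP_def by auto
      define \<alpha> where "\<alpha> = repV \<gamma>"
      define h where "h = snd (decV \<gamma>)"
      have key: "gen (M n (M n \<alpha> (sv v' (M m h h'))) (Q (Suc q)), (I (n - Suc q), w)) -
                 gen (M n (M n \<alpha> (sv v' h)) (Q (Suc q)), (I (n - Suc q), actW h' w)) \<in> relV (Suc q)"
        if v': "v' \<in> C (n-m)" "Suc q \<le> n - m" for v'
      proof -
        have Qc: "Q (Suc q) \<in> C n" using v' by auto
        have p1: "pl n (n-m) m h' \<in> C n" "pl n (n - Suc q - m) m h' \<in> C n" using v' d by (auto intro!: pl_closed)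
        have sv2: "sv v' (M m h h') = M n (sv v' h) (pl n (n-m) m h')"
        proof -
          have "sv v' (M m h h') = M n (sv v' h) (sv (I (n-m)) h')"
            using sv_mult[OF mn v'(1) _ one_closed d(3), of h] dd mn v' unfolding h_def by simp
          moreover have "sv (I (n-m)) h' = pl n (n-m) m h'" unfolding sv_def using mn d(3) p1 by simp
          ultimately show ?thesis by simp
        qed
        have qn: "M n (Q (Suc q)) (pl n (n - Suc q - m) m h') = M n (pl n (n-m) m h') (Q (Suc q))"
          by (rule Q_nat) (use v' d in auto)
        have "M n (M n \<alpha> (sv v' (M m h h'))) (Q (Suc q)) = M n (M n (M n \<alpha> (sv v' h)) (Q (Suc q))) (pl n (n - Suc q - m) m h')"
          unfolding sv2 using qn p1 Qc dd v' mn unfolding \<alpha>_def h_def by (simp add: m_assoc)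
        moreover have "gen (M n (M n (M n \<alpha> (sv v' h)) (Q (Suc q))) (pl n (n - Suc q - m) m h'), (I (n - Suc q), w)) -
                 gen (M n (M n \<alpha> (sv v' h)) (Q (Suc q)), (I (n - Suc q), actW h' w)) \<in> relV (Suc q)"
          by (rule RV_Gm) (use v' d dd mn in \<open>auto simp: \<alpha>_def h_def\<close>)
        ultimately show ?thesis by simp
      qed
      show ?thesis unfolding lv d(1) lin_ext_diff lin_ext_gen Phi_val g' \<gamma>_def[symmetric]
        dec_shift[OF mn \<gamma>c one_closed d(3)] using dd
        apply (simp add: Ind_def lin_ext_linear_comb \<alpha>_def[symmetric] h_def[symmetric])
        by (rule lin_ext_rels) (use key in \<open>auto dest!: keys0[OF _ e]\<close>)
    qed
  qed
qed


definition hprevV :: "(nat \<Rightarrow> 'g \<times> unit \<Rightarrow> ('g \<times> unit \<Rightarrow>\<^sub>0 'r)) \<Rightarrow> nat \<Rightarrow> ('g \<times> ('g \<times> 'w) \<Rightarrow>\<^sub>0 'r) \<Rightarrow> ('g \<times> ('g \<times> 'w) \<Rightarrow>\<^sub>0 'r)" where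
  "hprevV \<phi> q u = (if q = 0 then 0 else lin_ext (Phi \<phi> (q-1)) u)"

lemma Ind_lin: "Ind q \<alpha> h w e = lin_ext (\<lambda>a. Ind q \<alpha> h w (gen a)) e"
  unfolding Ind_def by (rule lin_ext_cong) simp

lemma Ind_add: "Ind q \<alpha> h w (x + y) = Ind q \<alpha> h w x + Ind q \<alpha> h w y"
  unfolding Ind_def by (rule lin_ext_add)
lemma Ind_diff: "Ind q \<alpha> h w (x - y) = Ind q \<alpha> h w x - Ind q \<alpha> h w y"
  unfolding Ind_def by (rule lin_ext_diff)

lemma K2_lin: assumes "m + Suc q \<le> n" "\<alpha> \<in> C n" "h \<in> C m" "e \<in> free_on (gens0 (n-m) (Suc q))"
  shows "dV (Suc q) (Ind (Suc q) \<alpha> h w e) - Ind q \<alpha> h w (d0 (n-m) (Suc q) e) \<in> relV q"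
proof -
  have "dV (Suc q) (Ind (Suc q) \<alpha> h w e) - Ind q \<alpha> h w (d0 (n-m) (Suc q) e) =
     lin_ext (\<lambda>a. dV (Suc q) (Ind (Suc q) \<alpha> h w (gen a)) - Ind q \<alpha> h w (d0 (n-m) (Suc q) (gen a))) e"
  proof -
    have 1: "dV (Suc q) (Ind (Suc q) \<alpha> h w e) = lin_ext (\<lambda>a. dV (Suc q) (Ind (Suc q) \<alpha> h w (gen a))) e"
      apply (subst Ind_lin) unfolding ctil_d_def[of G s b "homW_iota G s b" n] by (rule lin_ext_comp)
    have 2: "Ind q \<alpha> h w (d0 (n-m) (Suc q) e) = lin_ext (\<lambda>a. Ind q \<alpha> h w (d0 (n-m) (Suc q) (gen a))) e"
      apply (subst d_lin) unfolding Ind_def by (rule lin_ext_comp)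
    show ?thesis unfolding 1 2 lin_ext_linear_comb ..
  qed
  also have "\<dots> \<in> relV q"
  proof (rule lin_ext_rels)
    fix a assume "a \<in> Poly_Mapping.keys e"
    from keys0[OF this assms(4)] obtain v where v: "a = (v, ())" "v \<in> C (n-m)" "Suc q \<le> n - m" by blast
    show "dV (Suc q) (Ind (Suc q) \<alpha> h w (gen a)) - Ind q \<alpha> h w (d0 (n-m) (Suc q) (gen a)) \<in> relV q"
      using K2[of "Suc q" \<alpha> h v w] assms v by simp
  qed
  finally show ?thesis .
qed

lemma PV_gen: assumes "(g, (f, w)) \<in> gensV q" "HP (n-m) \<phi> q" "q \<noteq> 0 \<Longrightarrow> HP (n-m) \<phi> (q-1)"
  shows "dV (Suc q) (Phi \<phi> q (g, (f, w))) + hprevV \<phi> q (dV q (gen (g, (f, w)))) - gen (g, (f, w)) \<in> relV q"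
proof -
  have a: "m + q \<le> n" "g \<in> C n" "f \<in> C (n-q)" using assms(1) by auto
  have mn: "m \<le> n" using a by simp
  define \<gamma> where "\<gamma> = gam q g f"
  have \<gamma>c: "\<gamma> \<in> C n" unfolding \<gamma>_def using a by auto
  define \<alpha> where "\<alpha> = repV \<gamma>"
  define v where "v = fst (decV \<gamma>)"
  define h where "h = snd (decV \<gamma>)"
  have d: "v \<in> C (n-m)" "h \<in> C m" "\<alpha> \<in> C n"
    using dec_ok[OF mn \<gamma>c] rep_ok[OF mn \<gamma>c] unfolding v_def h_def \<alpha>_def by auto
  define e where "e = \<phi> q (v, ())"
  have ef: "e \<in> free_on (gens0 (n-m) (Suc q))" using assms(2) d unfolding HP_def e_def by auto
  have hp3: "d0 (n-m) (Suc q) e + hprev \<phi> q (d0 (n-m) q (gen (v, ()))) - gen (v, ()) \<in> rel0 (n-m) q"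
    using assms(2) d unfolding HP_def e_def by auto
  have A: "dV (Suc q) (Ind (Suc q) \<alpha> h w e) - Ind q \<alpha> h w (d0 (n-m) (Suc q) e) \<in> relV q"
  proof (cases "Suc q \<le> n - m")
    case True
    then show ?thesis by (intro K2_lin) (use d ef a in auto)
  next
    case False
    then have "gens0 (n-m) (Suc q) = {}" by (auto simp: ctil_gens_def)
    then have "e = 0" using ef free_on_empty by simp
    then show ?thesis by (simp add: Ind_def)
  qed
  have B: "hprevV \<phi> q (dV q (gen (g, (f, w)))) = Ind q \<alpha> h w (hprev \<phi> q (d0 (n-m) q (gen (v, ()))))"
  proof (cases "q = 0")
    case False
    then show ?thesis unfolding hprevV_def hprev_def \<alpha>_def h_def v_def \<gamma>_def
      using K3[OF a(1) _ a(2,3) assms(3)] by simp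
  qed (simp add: hprevV_def hprev_def Ind_def)
  have C: "gen (g, (f, w)) - Ind q \<alpha> h w (gen (v, ())) \<in> relV q"
    using K1[OF a] unfolding \<alpha>_def h_def v_def \<gamma>_def .
  have D: "Ind q \<alpha> h w (d0 (n-m) (Suc q) e + hprev \<phi> q (d0 (n-m) q (gen (v, ()))) - gen (v, ())) \<in> relV q"
    by (rule K4[OF a(1) d(3,2) hp3])
  have P: "Phi \<phi> q (g, (f, w)) = Ind (Suc q) \<alpha> h w e"
    unfolding Phi_val \<gamma>_def[symmetric] \<alpha>_def h_def e_def v_def ..
  have "dV (Suc q) (Phi \<phi> q (g, (f, w))) + hprevV \<phi> q (dV q (gen (g, (f, w)))) - gen (g, (f, w)) =
    (dV (Suc q) (Ind (Suc q) \<alpha> h w e) - Ind q \<alpha> h w (d0 (n-m) (Suc q) e)) +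
    Ind q \<alpha> h w (d0 (n-m) (Suc q) e + hprev \<phi> q (d0 (n-m) q (gen (v, ()))) - gen (v, ())) -
    (gen (g, (f, w)) - Ind q \<alpha> h w (gen (v, ())))"
    unfolding P B Ind_add Ind_diff by (simp add: algebra_simps)
  also have "\<dots> \<in> relV q" by (intro rels_diff rels_add A D C)
  finally show ?thesis .
qed

lemma PV: assumes "x \<in> free_on (gensV q)" "HP (n-m) \<phi> q" "q \<noteq> 0 \<Longrightarrow> HP (n-m) \<phi> (q-1)"
  shows "dV (Suc q) (lin_ext (Phi \<phi> q) x) + hprevV \<phi> q (dV q x) - x \<in> relV q"
proof -
  have "dV (Suc q) (lin_ext (Phi \<phi> q) x) + hprevV \<phi> q (dV q x) - x =
    lin_ext (\<lambda>a. dV (Suc q) (Phi \<phi> q a) + hprevV \<phi> q (dV q (gen a)) - gen a) x"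
  proof -
    have e1: "dV (Suc q) (lin_ext (Phi \<phi> q) x) = lin_ext (\<lambda>a. dV (Suc q) (Phi \<phi> q a)) x"
      unfolding ctil_d_def by (rule lin_ext_comp)
    have e2: "hprevV \<phi> q (dV q x) = lin_ext (\<lambda>a. hprevV \<phi> q (dV q (gen a))) x"
      apply (subst d_lin)
      unfolding hprevV_def by (cases "q=0") (simp_all add: lin_ext_def[of "\<lambda>a. 0"] lin_ext_comp)
    have e3: "lin_ext (\<lambda>a. dV (Suc q) (Phi \<phi> q a) + hprevV \<phi> q (dV q (gen a)) - gen a) x
       = lin_ext (\<lambda>a. dV (Suc q) (Phi \<phi> q a) + hprevV \<phi> q (dV q (gen a))) x - lin_ext gen x"
      by (simp only: lin_ext_linear_comb)
    show ?thesis unfolding e1 e2 e3 lin_ext_gen_id lin_ext_linear_comb(1) ..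
  qed
  also have "\<dots> \<in> relV q"
  proof (rule lin_ext_rels)
    fix a assume "a \<in> Poly_Mapping.keys x"
    then have ag: "a \<in> gensV q" using assms(1) by (auto dest: free_on_keys)
    obtain g f w where a: "a = (g, (f, w))" by (cases a) auto
    show "dV (Suc q) (Phi \<phi> q a) + hprevV \<phi> q (dV q (gen a)) - gen a \<in> relV q"
      unfolding a by (rule PV_gen) (use ag a assms in auto)
  qed
  finally show ?thesis .
qed

lemma cv_main: fixes \<phi> :: "nat \<Rightarrow> 'g \<times> unit \<Rightarrow> ('g \<times> unit \<Rightarrow>\<^sub>0 'r)"
  assumes "m + L \<le> n" "\<forall>j\<le>L. HP (n-m) \<phi> j" "x \<in> free_on (gensV L)"
  "L = 0 \<or> dV L x \<in> relV (L-1)"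
  shows "\<exists>y\<in>free_on (gensV (Suc L)). x - dV (Suc L) y \<in> relV L"
proof
  let ?y = "lin_ext (Phi \<phi> L) x"
  show "?y \<in> free_on (gensV (Suc L))"
  proof (rule free_on_lin_ext)
    fix a assume "a \<in> Poly_Mapping.keys x"
    then have ag: "a \<in> gensV L" using assms(3) by (auto dest: free_on_keys)
    obtain g f w where a: "a = (g, (f, w))" by (cases a) auto
    show "Phi \<phi> L a \<in> free_on (gensV (Suc L))" unfolding a by (rule Phi_free) (use ag a assms in auto)
  qed
  have P: "dV (Suc L) ?y + hprevV \<phi> L (dV L x) - x \<in> relV L"
    by (rule PV) (use assms in auto)
  have H: "hprevV \<phi> L (dV L x) \<in> relV L"
  proof (cases "L = 0")
    case False
    then have "lin_ext (Phi \<phi> (L-1)) (dV L x) \<in> relV (Suc (L-1))"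
      by (intro K5) (use assms in auto)
    then show ?thesis using False unfolding hprevV_def by simp
  qed (simp add: hprevV_def)
  have "x - dV (Suc L) ?y = hprevV \<phi> L (dV L x) - (dV (Suc L) ?y + hprevV \<phi> L (dV L x) - x)"
    by (simp add: algebra_simps)
  also have "\<dots> \<in> relV L" by (rule rels_diff[OF H P])
  finally show "x - dV (Suc L) ?y \<in> relV L" .
qed

end


theorem corollary5p11:
  fixes G :: "nat \<Rightarrow> 'g monoid" and s :: "nat \<Rightarrow> nat \<Rightarrow> 'g \<Rightarrow> 'g \<Rightarrow> 'g" and b :: "nat \<Rightarrow> nat \<Rightarrow> 'g"
    and N k a m :: nat
    and sm :: "'r::comm_ring_1 \<Rightarrow> 'w::ab_group_add \<Rightarrow> 'w" and actW :: "'g \<Rightarrow> 'w \<Rightarrow> 'w"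
  assumes "braided_stability_groupoid G s b"
    and H3: "\<forall>(i::int) (n::nat). -1 \<le> i \<and> i < int N \<and> int n > int k * i + int a \<longrightarrow>
               ctil_H_vanishes G s b (\<lambda>j. UNIV :: unit set) (\<lambda>j. {} :: (unit \<Rightarrow>\<^sub>0 'r) set)
                 (\<lambda>j t x. x) (\<lambda>j x. x) i n"
    and "RG_module (G m) sm actW"
  shows "\<forall>(i::int) (n::nat). -1 \<le> i \<and> i < int N \<and> int n > int k * i + int a + int m \<longrightarrow>
           ctil_H_vanishes G s b (homW_gens G m) (homW_rels G s sm actW m) (homW_act G)
             (homW_iota G s b) i n"
proof (intro allI impI)
  fix i :: int and n :: nat
  assume hi: "-1 \<le> i \<and> i < int N \<and> int n > int k * i + int a + int m"
  interpret cv G s b n m sm actW by unfold_locales (rule assms(1))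
  define L where "L = nat (i+1)"
  have iL: "int L = i + 1" unfolding L_def using hi by simp
  show "ctil_H_vanishes G s b (homW_gens G m) (homW_rels G s sm actW m) (homW_act G) (homW_iota G s b) i n"
    unfolding ctil_H_vanishes_def L_def[symmetric]
  proof (intro ballI impI)
    fix x assume x: "x \<in> free_on (gensV L)" and cyc: "L = 0 \<or> dV L x \<in> relV (L-1)"
    show "\<exists>y\<in>free_on (gensV (Suc L)). x - dV (Suc L) y \<in> relV L"
    proof (cases "m + L \<le> n")
      case False
      then have "gensV L = {}" by (auto simp: ctil_gens_def homW_gens_def)
      then have "x = 0" using x free_on_empty by simp
      then show ?thesis by (intro bexI[of _ 0]) auto
    next
      case True
      have H3': "\<forall>j\<le>L. ctil_H_vanishes G s b (\<lambda>j. UNIV :: unit set) (\<lambda>j. {} :: (unit \<Rightarrow>\<^sub>0 'r) set)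
                 (\<lambda>j t x. x) (\<lambda>j x. x) (int j - 1) (n-m)"
      proof (intro allI impI)
        fix j assume j: "j \<le> L"
        have j1: "int j - 1 \<le> i" using j iL by simp
        have "int k * (int j - 1) \<le> int k * i" by (rule mult_left_mono[OF j1]) simp
        moreover have "int (n - m) = int n - int m" using True by simp
        ultimately have "-1 \<le> int j - 1 \<and> int j - 1 < int N \<and> int (n-m) > int k * (int j - 1) + int a"
          using hi j1 by linarith
        then show "ctil_H_vanishes G s b (\<lambda>j. UNIV :: unit set) (\<lambda>j. {} :: (unit \<Rightarrow>\<^sub>0 'r) set)
                 (\<lambda>j t x. x) (\<lambda>j x. x) (int j - 1) (n-m)" using H3 by blast
      qed
      have Ln: "L \<le> n - m" using True by simp
      from HP_exists[OF Ln H3'] obtain \<phi> :: "nat \<Rightarrow> 'g \<times> unit \<Rightarrow> ('g \<times> unit \<Rightarrow>\<^sub>0 'r)"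
        where "\<forall>j\<le>L. HP (n-m) \<phi> j" by blast
      then show ?thesis using cv_main[OF True _ x cyc] by blast
    qed
  qed
qed


end
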